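(* Let $p \geq 6$ and $q_1, q_2 \geq 4$ be integers, and let $L$ be the Laplacian of the graph $C_{q_1} \oplus K_p \oplus C_{q_2}$, with eigenvalues $\lambda_1(L) \geq \dots \geq \lambda_{p+q_1+q_2-2}(L)$. Let $q = \max\{q_1,q_2\}$ and let $\lambda_1(L_{C_q})$ denote the largest eigenvalue of the Laplacian of the path graph on $q-1$ vertices. Then $\lambda_1(L), \lambda_2(L) \in [p,p+2]$; $\lambda_j(L) = p$ for all $j \in \{3,\ldots,p-1\}$; $\lambda_p(L), \lambda_{p+1}(L) \in (0, \min\{\lambda_1(L_{C_q})+2,\, p\})$ (an interval contained in $(0,p)$ if $p\geq 6$); and $\lambda_j(L) \in [0,4)$ for all $j \in \{p+3,\ldots,p+q_1+q_2-2\}$.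
   Context: For integers $p \geq 3$, $q_1,q_2 \geq 2$, the graph $C_{q_1} \oplus K_p \oplus C_{q_2}$ has vertex set $\{-q_1-p+2,\ldots,-p\} \cup \{-p+1,\ldots,0\} \cup \{1,\ldots,q_2-1\}$ (so $p+q_1+q_2-2$ vertices). Its edges are: every pair of distinct vertices in $\{-p+1,\ldots,0\}$ (a complete graph), the edges $\{-p,-p+1\}$ and $\{0,1\}$, the edges $\{j,j+1\}$ for $-q_1-p+2 \leq j \leq -p-1$, and the edges $\{j,j+1\}$ for $1 \leq j \leq q_2-2$. The Laplacian $L$ is the matrix with $L_{ii}$ equal to the degree of vertex $i$, $L_{ij}=-1$ if $i \neq j$ are adjacent and $0$ otherwise. Eigenvalues are listed with multiplicity in non-increasing order. *)

theory Defs
  imports "Jordan_Normal_Form.Char_Poly"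
begin

text \<open>Eigenvalues of a square real matrix, listed with multiplicity in non-increasing order:
  the (unique) non-increasingly sorted list of length n whose linear factors multiply to the
  characteristic polynomial. (For symmetric real matrices such as Laplacians it exists.)\<close>
definition eigs :: "real mat \<Rightarrow> real list" where
  "eigs A = (THE es. length es = dim_row A \<and> sorted_wrt (\<ge>) es \<and>
                     char_poly A = (\<Prod>e\<leftarrow>es. [:- e, 1:]))"

definition lam :: "real mat \<Rightarrow> nat \<Rightarrow> real" where
  "lam A j = eigs A ! (j - 1)"

definition laplacian :: "nat \<Rightarrow> (nat \<Rightarrow> nat \<Rightarrow> bool) \<Rightarrow> real mat" where
  "laplacian n E = mat n n (\<lambda>(i, j).
     if i = j then real (card {k. k < n \<and> k \<noteq> i \<and> E i k})
     else if E i j then -1 else 0)"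

text \<open>Adjacency of C_q1 (+) K_p (+) C_q2 on the integer vertex set
  {-q1-p+2, ..., q2-1}, exactly as in the paper.\<close>
definition ckc_adj :: "int \<Rightarrow> int \<Rightarrow> int \<Rightarrow> int \<Rightarrow> int \<Rightarrow> bool" where
  "ckc_adj p q1 q2 u v \<longleftrightarrow> u \<noteq> v \<and>
     ((-p+1 \<le> u \<and> u \<le> 0 \<and> -p+1 \<le> v \<and> v \<le> 0)
      \<or> {u, v} = {-p, -p+1}
      \<or> {u, v} = {0, 1}
      \<or> (\<bar>u - v\<bar> = 1 \<and> -q1-p+2 \<le> min u v \<and> min u v \<le> -p-1)
      \<or> (\<bar>u - v\<bar> = 1 \<and> 1 \<le> min u v \<and> min u v \<le> q2-2))"

definition ckc_laplacian :: "nat \<Rightarrow> nat \<Rightarrow> nat \<Rightarrow> real mat" where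
  "ckc_laplacian p q1 q2 = laplacian (p + q1 + q2 - 2)
     (\<lambda>i j. ckc_adj (int p) (int q1) (int q2)
              (int i - int (q1 + p - 2)) (int j - int (q1 + p - 2)))"

definition path_laplacian :: "nat \<Rightarrow> real mat" where
  "path_laplacian m = laplacian m (\<lambda>i j. i + 1 = j \<or> j + 1 = i)"

end

theory Submission
  imports Defs
begin

lemma real_sym_eigenvector:
  fixes A :: "real mat"
  assumes A: "A \<in> carrier_mat n n" and sym: "transpose_mat A = A" and n: "0 < n"
  shows "\<exists>e v. v \<in> carrier_vec n \<and> v \<noteq> 0\<^sub>v n \<and> A *\<^sub>v v = e \<cdot>\<^sub>v v"
proof -
  define Ac where "Ac = map_mat complex_of_real A"
  have Ac: "Ac \<in> carrier_mat n n" using A unfolding Ac_def by auto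
  obtain as where as: "char_poly Ac = (\<Prod>a\<leftarrow>as. [:- a, 1:])" "length as = n"
    using char_poly_factorized[OF Ac] by blast
  then obtain a as' where asc: "as = a # as'" using n by (cases as) auto
  have "poly (char_poly Ac) a = 0" unfolding as(1) asc by simp
  hence "eigenvalue Ac a" using eigenvalue_root_char_poly[OF Ac] by simp
  then obtain z where z: "eigenvector Ac z a" unfolding eigenvalue_def by blast
  hence zc: "z \<in> carrier_vec n" and z0: "z \<noteq> 0\<^sub>v n" and ze: "Ac *\<^sub>v z = a \<cdot>\<^sub>v z"
    unfolding eigenvector_def using Ac by auto
  have Az: "(\<Sum>j<n. complex_of_real (A $$ (i,j)) * z $ j) = a * z $ i" if i: "i < n" for i
  proof -
    have "(Ac *\<^sub>v z) $ i = a * z $ i" using ze i zc by simp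
    moreover have "(Ac *\<^sub>v z) $ i = (\<Sum>j<n. complex_of_real (A $$ (i,j)) * z $ j)"
      using i Ac A zc unfolding Ac_def
      by (auto simp: mult_mat_vec_def scalar_prod_def lessThan_atLeast0 intro!: sum.cong)
    ultimately show ?thesis by simp
  qed
  define s where "s = (\<Sum>i<n. cnj (z $ i) * (\<Sum>j<n. complex_of_real (A $$ (i,j)) * z $ j))"
  define N where "N = (\<Sum>i<n. (cmod (z $ i))\<^sup>2)"
  have s1: "s = a * complex_of_real N"
  proof -
    have "s = (\<Sum>i<n. a * (cnj (z $ i) * z $ i))" unfolding s_def
      by (rule sum.cong, simp, subst Az, auto simp: algebra_simps)
    also have "\<dots> = a * (\<Sum>i<n. cnj (z $ i) * z $ i)" by (simp add: sum_distrib_left)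
    also have "(\<Sum>i<n. cnj (z $ i) * z $ i) = complex_of_real N" unfolding N_def of_real_sum
      by (rule sum.cong, simp, insert complex_norm_square, force)
    finally show ?thesis .
  qed
  have symA: "A $$ (i,j) = A $$ (j,i)" if "i < n" "j < n" for i j
    using sym that A by (metis carrier_matD(1) carrier_matD(2) index_transpose_mat(1))
  have s2: "cnj s = s"
  proof -
    have "cnj s = (\<Sum>i<n. \<Sum>j<n. z $ i * complex_of_real (A $$ (i,j)) * cnj (z $ j))"
      unfolding s_def by (simp add: sum_distrib_left algebra_simps)
    also have "\<dots> = (\<Sum>j<n. \<Sum>i<n. z $ i * complex_of_real (A $$ (i,j)) * cnj (z $ j))"
      by (rule sum.swap)
    also have "\<dots> = s" unfolding s_def sum_distrib_left
      by (intro sum.cong refl, subst symA, auto simp: algebra_simps)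
    finally show ?thesis .
  qed
  have Npos: "N > 0"
  proof -
    obtain i where i: "i < n" "z $ i \<noteq> 0" using z0 zc by (metis carrier_vecD eq_vecI index_zero_vec)
    have "N \<ge> (cmod (z $ i))\<^sup>2" unfolding N_def
      by (rule member_le_sum, insert i, auto)
    moreover have "(cmod (z $ i))\<^sup>2 > 0" using i by simp
    ultimately show ?thesis by linarith
  qed
  have "Im s = 0" using arg_cong[OF s2, of Im] by simp
  hence "Im a * N = 0" using s1 by simp
  hence ima: "Im a = 0" using Npos by simp
  define e where "e = Re a"
  have Re_eq: "(\<Sum>j<n. A $$ (i,j) * Re (z $ j)) = e * Re (z $ i)"
    and Im_eq: "(\<Sum>j<n. A $$ (i,j) * Im (z $ j)) = e * Im (z $ i)" if i: "i < n" for i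
  proof -
    have "Re (\<Sum>j<n. complex_of_real (A $$ (i,j)) * z $ j) = (\<Sum>j<n. A $$ (i,j) * Re (z $ j))"
      by (simp add: Re_sum)
    thus "(\<Sum>j<n. A $$ (i,j) * Re (z $ j)) = e * Re (z $ i)" using Az[OF i] ima e_def by simp
    have "Im (\<Sum>j<n. complex_of_real (A $$ (i,j)) * z $ j) = (\<Sum>j<n. A $$ (i,j) * Im (z $ j))"
      by (simp add: Im_sum)
    thus "(\<Sum>j<n. A $$ (i,j) * Im (z $ j)) = e * Im (z $ i)" using Az[OF i] ima e_def by simp
  qed
  define vr where "vr = vec n (\<lambda>i. Re (z $ i))"
  define vi where "vi = vec n (\<lambda>i. Im (z $ i))"
  have evr: "A *\<^sub>v vr = e \<cdot>\<^sub>v vr"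
    by (rule eq_vecI, insert A Re_eq, auto simp: vr_def mult_mat_vec_def scalar_prod_def lessThan_atLeast0)
  have evi: "A *\<^sub>v vi = e \<cdot>\<^sub>v vi"
    by (rule eq_vecI, insert A Im_eq, auto simp: vi_def mult_mat_vec_def scalar_prod_def lessThan_atLeast0)
  have "vr \<noteq> 0\<^sub>v n \<or> vi \<noteq> 0\<^sub>v n"
  proof (rule ccontr)
    assume "\<not> ?thesis"
    hence "vr = 0\<^sub>v n" "vi = 0\<^sub>v n" by auto
    hence "z = 0\<^sub>v n"
    proof (intro eq_vecI)
      fix i assume i: "i < dim_vec (0\<^sub>v n :: complex vec)"
      have "vr $ i = 0" "vi $ i = 0" using \<open>vr = 0\<^sub>v n\<close> \<open>vi = 0\<^sub>v n\<close> i by auto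
      thus "z $ i = 0\<^sub>v n $ i" using i by (auto simp: vr_def vi_def complex_eq_iff)
    qed (insert zc, auto)
    thus False using z0 by simp
  qed
  moreover have "vr \<in> carrier_vec n" "vi \<in> carrier_vec n" by (auto simp: vr_def vi_def)
  ultimately show ?thesis using evr evi by blast
qed

lemma sum_delta_nat: "i < (n::nat) \<Longrightarrow> (\<Sum>j<n. (if i = j then (1::real) else 0) * f j) = f i"
proof -
  assume i: "i < n"
  have "(\<Sum>j<n. (if i = j then (1::real) else 0) * f j) = (\<Sum>j<n. if i = j then f j else 0)"
    by (rule sum.cong, auto)
  also have "\<dots> = f i" using i by (subst sum.delta'[OF finite_lessThan], simp)
  finally show ?thesis .
qed

lemma householder:
  fixes v :: "real vec"
  assumes vc: "v \<in> carrier_vec n" and vv: "v \<bullet> v = 1" and n: "0 < n"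
  shows "\<exists>H \<in> carrier_mat n n. transpose_mat H = H \<and> H * H = 1\<^sub>m n \<and> H *\<^sub>v unit_vec n 0 = v"
proof (cases "v = unit_vec n 0")
  case True
  thus ?thesis by (intro bexI[of _ "1\<^sub>m n"], auto)
next
  case False
  define w where "w = v - unit_vec n 0"
  have wc: "w \<in> carrier_vec n" using vc by (simp add: w_def)
  have wi: "w $ i = v $ i - (if i = 0 then 1 else 0)" if "i < n" for i
    using that vc by (auto simp: w_def)
  define s where "s = (\<Sum>j<n. w $ j * w $ j)"
  have vv': "(\<Sum>j<n. v $ j * v $ j) = 1" using vv vc by (auto simp: scalar_prod_def lessThan_atLeast0)
  have s2: "s = 2 - 2 * v $ 0"
  proof -
    have "s = (\<Sum>j<n. v $ j * v $ j - 2 * ((if 0 = j then 1 else 0) * v $ j) + (if 0 = j then 1 else 0) * 1)"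
      unfolding s_def by (rule sum.cong, simp, auto simp: wi algebra_simps)
    also have "\<dots> = (\<Sum>j<n. v $ j * v $ j) - 2 * (\<Sum>j<n. (if 0 = j then 1 else 0) * v $ j)
       + (\<Sum>j<n. (if 0 = j then 1 else 0) * 1)"
      by (simp add: sum.distrib sum_subtractf sum_distrib_left)
    also have "\<dots> = 2 - 2 * v $ 0" 
      using n vv' sum_delta_nat[OF n, of "\<lambda>j. v $ j"] sum_delta_nat[OF n, of "\<lambda>j. 1"] by simp
    finally show ?thesis .
  qed
  have wnz: "w \<noteq> 0\<^sub>v n"
  proof
    assume w0: "w = 0\<^sub>v n"
    have "v = unit_vec n 0"
    proof (rule eq_vecI)
      fix i assume "i < dim_vec (unit_vec n 0)"
      hence i: "i < n" by simp
      have "w $ i = 0" using w0 i by simp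
      thus "v $ i = unit_vec n 0 $ i" using wi[OF i] i by auto
    qed (insert vc, auto)
    thus False using False by simp
  qed
  obtain k where k: "k < n" "w $ k \<noteq> 0"
  proof -
    have "\<exists>k<n. w $ k \<noteq> 0"
    proof (rule ccontr)
      assume "\<not> ?thesis"
      hence "w = 0\<^sub>v n" using wc by (intro eq_vecI, auto)
      thus False using wnz by simp
    qed
    thus ?thesis using that by blast
  qed
  have spos: "s > 0"
  proof -
    have "s \<ge> w $ k * w $ k" unfolding s_def by (rule member_le_sum, insert k, auto)
    moreover have "w $ k * w $ k > 0" using k not_real_square_gt_zero by blast
    ultimately show ?thesis by linarith
  qed
  define c where "c = 2 / s"
  have cs: "c * c * s = 2 * c" using spos unfolding c_def by (simp add: field_simps power2_eq_square)
  define H where "H = mat n n (\<lambda>(i,j). (if i = j then 1 else 0) - c * w $ i * w $ j)"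
  have Hc: "H \<in> carrier_mat n n" unfolding H_def by simp
  have HT: "transpose_mat H = H" unfolding H_def by (rule eq_matI, auto)
  have HH: "H * H = 1\<^sub>m n"
  proof (rule eq_matI)
    fix i k assume i: "i < dim_row (1\<^sub>m n :: real mat)" and k: "k < dim_col (1\<^sub>m n :: real mat)"
    hence i: "i < n" and k: "k < n" by auto
    have "(H * H) $$ (i,k) = (\<Sum>j<n. ((if i = j then 1 else 0) - c * w $ i * w $ j) *
                                     ((if j = k then 1 else 0) - c * w $ j * w $ k))"
      using i k by (auto simp: H_def scalar_prod_def lessThan_atLeast0 intro!: sum.cong)
    also have "\<dots> = (\<Sum>j<n. (if i = j then 1 else 0) * (if k = j then 1 else 0)
        - c * w $ k * ((if i = j then 1 else 0) * w $ j)
        - c * w $ i * ((if k = j then 1 else 0) * w $ j)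
        + c * c * w $ i * w $ k * (w $ j * w $ j))"
      by (rule sum.cong, simp, auto simp: algebra_simps)
    also have "\<dots> = (\<Sum>j<n. (if i = j then 1 else 0) * (if k = j then 1 else 0))
        - c * w $ k * (\<Sum>j<n. (if i = j then 1 else 0) * w $ j)
        - c * w $ i * (\<Sum>j<n. (if k = j then 1 else 0) * w $ j)
        + c * c * w $ i * w $ k * s"
      unfolding s_def by (simp only: sum.distrib sum_subtractf sum_distrib_left)
    also have "\<dots> = (if i = k then 1 else 0) - c * w $ k * w $ i - c * w $ i * w $ k + c * c * s * w $ i * w $ k"
      using sum_delta_nat[OF i, of "\<lambda>j. (if k = j then 1 else 0)"] sum_delta_nat[OF i, of "\<lambda>j. w $ j"]
        sum_delta_nat[OF k, of "\<lambda>j. w $ j"] by simp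
    also have "\<dots> = (if i = k then 1 else 0)" unfolding cs by (simp add: algebra_simps)
    finally show "(H * H) $$ (i,k) = 1\<^sub>m n $$ (i,k)" using i k by simp
  qed (auto simp: H_def)
  have w0: "w $ 0 = v $ 0 - 1" using wi[OF n] by simp
  have w0nz: "w $ 0 \<noteq> 0" using s2 spos w0 by auto
  have cw: "c * w $ 0 = -1" unfolding c_def s2 w0 using w0nz w0 by (auto simp: field_simps)
  have He: "H *\<^sub>v unit_vec n 0 = v"
  proof (rule eq_vecI)
    fix i assume "i < dim_vec v"
    hence i: "i < n" using vc by auto
    have "(H *\<^sub>v unit_vec n 0) $ i = H $$ (i, 0)"
      using i n Hc by (auto simp: scalar_prod_def lessThan_atLeast0 if_distrib cong: if_cong)
    also have "\<dots> = (if i = 0 then 1 else 0) - (c * w $ 0) * w $ i" using i n by (simp add: H_def)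
    also have "\<dots> = v $ i" unfolding cw using wi[OF i] by simp
    finally show "(H *\<^sub>v unit_vec n 0) $ i = v $ i" .
  qed (insert vc Hc, auto)
  show ?thesis using Hc HT HH He by blast
qed

lemma vec_sq_pos:
  fixes v :: "real vec"
  assumes vc: "v \<in> carrier_vec n" and v0: "v \<noteq> 0\<^sub>v n"
  shows "v \<bullet> v > 0"
proof -
  have "\<exists>k<n. v $ k \<noteq> 0"
  proof (rule ccontr)
    assume "\<not> ?thesis"
    hence "v = 0\<^sub>v n" using vc by (intro eq_vecI, auto)
    thus False using v0 by simp
  qed
  then obtain k where k: "k < n" "v $ k \<noteq> 0" by blast
  have "v \<bullet> v = (\<Sum>j<n. v $ j * v $ j)" using vc by (auto simp: scalar_prod_def lessThan_atLeast0)
  also have "\<dots> \<ge> v $ k * v $ k" by (rule member_le_sum, insert k, auto)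
  finally show ?thesis using k not_real_square_gt_zero by (metis less_le_trans)
qed

lemma mat_unit_entry: "(A :: 'a :: semiring_1 mat) \<in> carrier_mat n n \<Longrightarrow> i < n \<Longrightarrow> j < n \<Longrightarrow> (A *\<^sub>v unit_vec n j) $ i = A $$ (i,j)"
proof -
  assume A: "A \<in> carrier_mat n n" and i: "i < n" and j: "j < n"
  have "(A *\<^sub>v unit_vec n j) $ i = row A i \<bullet> unit_vec n j" using A i by simp
  also have "\<dots> = row A i $ j" by (rule scalar_prod_right_unit[OF j])
  finally show ?thesis using A i j by simp
qed

theorem spectral:
  fixes A :: "real mat"
  assumes "A \<in> carrier_mat n n" "transpose_mat A = A"
  shows "\<exists>P D. similar_mat_wit A D P (transpose_mat P) \<and> diagonal_mat D"
  using assms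
proof (induction n arbitrary: A)
  case 0
  hence "similar_mat_wit A A (1\<^sub>m 0) (transpose_mat (1\<^sub>m 0))"
    using similar_mat_wit_refl[OF "0.prems"(1)] by simp
  moreover have "diagonal_mat A" using "0.prems" by (auto simp: diagonal_mat_def)
  ultimately show ?case by blast
next
  case (Suc m A)
  let ?n = "Suc m"
  have A: "A \<in> carrier_mat ?n ?n" and sym: "transpose_mat A = A" using Suc.prems by auto
  obtain e v where v: "v \<in> carrier_vec ?n" "v \<noteq> 0\<^sub>v ?n" "A *\<^sub>v v = e \<cdot>\<^sub>v v"
    using real_sym_eigenvector[OF A sym] by blast
  define u where "u = (1 / sqrt (v \<bullet> v)) \<cdot>\<^sub>v v"
  have vvpos: "v \<bullet> v > 0" using vec_sq_pos[OF v(1,2)] .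
  have uc: "u \<in> carrier_vec ?n" using v unfolding u_def by simp
  have uu: "u \<bullet> u = 1"
  proof -
    have "u \<bullet> u = (1 / sqrt (v \<bullet> v)) * (1 / sqrt (v \<bullet> v)) * (v \<bullet> v)"
      unfolding u_def using v(1) by (simp add: algebra_simps)
    also have "\<dots> = 1" using vvpos by (simp add: field_simps)
    finally show ?thesis .
  qed
  have Au: "A *\<^sub>v u = e \<cdot>\<^sub>v u"
    unfolding u_def using mult_mat_vec[OF A v(1)] v(3) v(1) by (simp add: smult_smult_assoc mult.commute)
  obtain H where H: "H \<in> carrier_mat ?n ?n" "transpose_mat H = H" "H * H = 1\<^sub>m ?n" "H *\<^sub>v unit_vec ?n 0 = u"
    using householder[OF uc uu] by auto
  define A1 where "A1 = H * A * H"
  have A1c: "A1 \<in> carrier_mat ?n ?n" unfolding A1_def using H A by auto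
  have A1sym: "transpose_mat A1 = A1"
  proof -
    have "transpose_mat A1 = transpose_mat H * transpose_mat (H * A)"
      unfolding A1_def by (rule transpose_mult, insert H A, auto)
    also have "transpose_mat (H * A) = transpose_mat A * transpose_mat H"
      by (rule transpose_mult, insert H A, auto)
    finally show ?thesis unfolding A1_def sym H(2) using H A by simp
  qed
  have col0: "A1 *\<^sub>v unit_vec ?n 0 = e \<cdot>\<^sub>v unit_vec ?n 0"
  proof -
    have "A1 *\<^sub>v unit_vec ?n 0 = H *\<^sub>v (A *\<^sub>v (H *\<^sub>v unit_vec ?n 0))"
    proof -
      have "A1 *\<^sub>v unit_vec ?n 0 = (H * A) *\<^sub>v (H *\<^sub>v unit_vec ?n 0)"
        unfolding A1_def by (rule assoc_mult_mat_vec, insert H A, auto)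
      also have "\<dots> = H *\<^sub>v (A *\<^sub>v (H *\<^sub>v unit_vec ?n 0))"
        by (rule assoc_mult_mat_vec, insert H A, auto)
      finally show ?thesis .
    qed
    also have "\<dots> = H *\<^sub>v (e \<cdot>\<^sub>v u)" unfolding H(4) Au ..
    also have "\<dots> = e \<cdot>\<^sub>v (H *\<^sub>v u)" using mult_mat_vec[OF H(1) uc] .
    also have "H *\<^sub>v u = unit_vec ?n 0"
    proof -
      have "H *\<^sub>v u = H *\<^sub>v (H *\<^sub>v unit_vec ?n 0)" unfolding H(4) ..
      also have "\<dots> = (H * H) *\<^sub>v unit_vec ?n 0" by (rule assoc_mult_mat_vec[symmetric], insert H, auto)
      finally show ?thesis unfolding H(3) by simp
    qed
    finally show ?thesis .
  qed
  have A1i0: "A1 $$ (i, 0) = (if i = 0 then e else 0)" if i: "i < ?n" for i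
  proof -
    have "A1 $$ (i, 0) = (A1 *\<^sub>v unit_vec ?n 0) $ i" using mat_unit_entry[OF A1c i] by simp
    thus ?thesis unfolding col0 using i by simp
  qed
  have A1sym': "A1 $$ (i,j) = A1 $$ (j,i)" if "i < ?n" "j < ?n" for i j
    using A1sym that A1c by (metis carrier_matD(1) carrier_matD(2) index_transpose_mat(1))
  obtain B1 B2 B3 B4 where sb: "split_block A1 1 1 = (B1, B2, B3, B4)" by (cases "split_block A1 1 1") auto
  have A1eq: "A1 = four_block_mat B1 B2 B3 B4" using split_block(5)[OF sb, of m m] A1c by auto
  have B1c: "B1 \<in> carrier_mat 1 1" using split_block(1)[OF sb, of m m] A1c by auto
  have B4c: "B4 \<in> carrier_mat m m" using split_block(4)[OF sb, of m m] A1c by auto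
  have A10j: "A1 $$ (0, Suc j) = 0" if "j < m" for j
    using A1sym'[of 0 "Suc j"] A1i0[of "Suc j"] that by simp
  have B2: "B2 = 0\<^sub>m 1 m"
    using sb A1c A10j unfolding split_block_def Let_def
    by (auto intro!: eq_matI)
  have B3: "B3 = 0\<^sub>m m 1"
    using sb A1c A1i0 unfolding split_block_def Let_def
    by (auto intro!: eq_matI)
  have B4sym: "transpose_mat B4 = B4"
    using sb A1c A1sym' unfolding split_block_def Let_def
    by (auto intro!: eq_matI)
  obtain P' D' where IH: "similar_mat_wit B4 D' P' (transpose_mat P')" "diagonal_mat D'"
    using Suc.IH[OF B4c B4sym] by blast
  have P'c: "P' \<in> carrier_mat m m" and D'c: "D' \<in> carrier_mat m m"
    using similar_mat_witD2[OF B4c IH(1)] by auto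
  define P1 where "P1 = four_block_mat (1\<^sub>m 1) (0\<^sub>m 1 m) (0\<^sub>m m 1) P'"
  define Q1 where "Q1 = four_block_mat (1\<^sub>m 1) (0\<^sub>m 1 m) (0\<^sub>m m 1) (transpose_mat P')"
  define D1 where "D1 = four_block_mat B1 (0\<^sub>m 1 m) (0\<^sub>m m 1) D'"
  have sim1: "similar_mat_wit A1 D1 P1 Q1"
    unfolding A1eq D1_def P1_def Q1_def
    by (rule similar_mat_wit_four_block[OF similar_mat_wit_refl[OF B1c] IH(1)],
        insert P'c B1c B2 B3 B4c, auto)
  have sim0: "similar_mat_wit A A1 H H"
  proof (rule similar_mat_witI[OF H(3) H(3) _ A A1c H(1) H(1)])
    have HA: "H * A \<in> carrier_mat ?n ?n" using H A by auto
    have "H * A1 * H = H * (H * A * H) * H" unfolding A1_def ..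
    also have "\<dots> = (H * H) * A * (H * H)"
      using H(1) A HA by (simp add: assoc_mult_mat[of _ ?n ?n _ ?n _ ?n])
    finally have "H * A1 * H = (H * H) * A * (H * H)" .
    thus "A = H * A1 * H" unfolding H(3) using A by simp
  qed
  have sim: "similar_mat_wit A D1 (H * P1) (Q1 * H)"
    by (rule similar_mat_wit_trans[OF sim0 sim1])
  have "transpose_mat (H * P1) = transpose_mat P1 * transpose_mat H"
    by (rule transpose_mult, insert H P'c, auto simp: P1_def)
  also have "transpose_mat P1 = Q1" unfolding P1_def Q1_def
    by (subst transpose_four_block_mat, insert P'c, auto)
  finally have QT: "Q1 * H = transpose_mat (H * P1)" using H(2) by simp
  have diag: "diagonal_mat D1"
    unfolding diagonal_mat_def D1_def using IH(2) B1c D'c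
    by (auto simp: diagonal_mat_def)
  show ?case using sim diag unfolding QT by blast
qed

lemma prod_list_perm:
  "mset xs = mset ys \<Longrightarrow> prod_list (map (f :: 'a \<Rightarrow> 'b :: comm_monoid_mult) xs) = prod_list (map f ys)"
proof -
  assume m: "mset xs = mset ys"
  have "prod_list (map f xs) = prod_mset (mset (map f xs))" by (rule prod_mset_prod_list[symmetric])
  also have "\<dots> = prod_mset (mset (map f ys))" unfolding mset_map m ..
  also have "\<dots> = prod_list (map f ys)" by (rule prod_mset_prod_list)
  finally show ?thesis .
qed

lemma prod_lin_mset:
  fixes xs ys :: "real list"
  shows "(\<Prod>e\<leftarrow>xs. [:- e, 1:]) = (\<Prod>e\<leftarrow>ys. [:- e, 1:]) \<Longrightarrow> mset xs = mset ys"
proof (induction xs arbitrary: ys)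
  case Nil
  have "degree (\<Prod>e\<leftarrow>ys. [:- e, 1:]) = length ys" by (rule degree_linear_factors)
  with Nil have "length ys = 0" by simp
  thus ?case by simp
next
  case (Cons x xs ys)
  have "poly (\<Prod>e\<leftarrow>ys. [:- e, 1:]) x = 0" unfolding Cons.prems[symmetric] by simp
  hence "x \<in> set ys" by (auto simp: poly_prod_list prod_list_zero_iff)
  hence m: "mset ys = mset (x # remove1 x ys)" by simp
  have "(\<Prod>e\<leftarrow>ys. [:- e, 1:]) = [:- x, 1:] * (\<Prod>e\<leftarrow>remove1 x ys. [:- e, 1:])"
    using prod_list_perm[OF m, of "\<lambda>e. [:- e, 1:]"] by simp
  with Cons.prems have "[:- x, 1:] * (\<Prod>e\<leftarrow>xs. [:- e, 1:]) = [:- x, 1:] * (\<Prod>e\<leftarrow>remove1 x ys. [:- e, 1:])"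
    by simp
  hence "(\<Prod>e\<leftarrow>xs. [:- e, 1:]) = (\<Prod>e\<leftarrow>remove1 x ys. [:- e, 1:])"
    by (subst (asm) mult_left_cancel, auto)
  from Cons.IH[OF this] show ?case by (subst m, simp)
qed

lemma eigs_unique:
  assumes cp: "char_poly A = (\<Prod>e\<leftarrow>es. [:- e, 1:])" and len: "length es = dim_row A"
    and so: "sorted_wrt (\<ge>) es"
  shows "eigs A = es"
  unfolding eigs_def
proof (rule the_equality)
  show "length es = dim_row A \<and> sorted_wrt (\<ge>) es \<and> char_poly A = (\<Prod>e\<leftarrow>es. [:- e, 1:])"
    using assms by auto
  fix es' assume "length es' = dim_row A \<and> sorted_wrt (\<ge>) es' \<and> char_poly A = (\<Prod>e\<leftarrow>es'. [:- e, 1:])"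
  hence so': "sorted_wrt (\<ge>) es'" and cp': "char_poly A = (\<Prod>e\<leftarrow>es'. [:- e, 1:])" by auto
  have m: "mset es' = mset es" using prod_lin_mset[of es' es] cp cp' by simp
  have s1: "sorted (rev es')" using so' by (simp add: sorted_wrt_rev)
  have s2: "sorted (rev es)" using so by (simp add: sorted_wrt_rev)
  have "sort (rev es) = rev es'" by (rule properties_for_sort, insert m s1, auto)
  moreover have "sort (rev es) = rev es" by (rule properties_for_sort, insert s2, auto)
  ultimately show "es' = es" by simp
qed


lemma spectral_data:
  fixes A :: "real mat"
  assumes A: "A \<in> carrier_mat n n" and sym: "transpose_mat A = A"
  shows "\<exists>P d. P \<in> carrier_mat n n \<and> P * transpose_mat P = 1\<^sub>m n \<and>
     (\<forall>x \<in> carrier_vec n. x \<bullet> (A *\<^sub>v x) = (\<Sum>i<n. d i * ((transpose_mat P *\<^sub>v x) $ i)^2) \<and>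
                           x \<bullet> x = (\<Sum>i<n. ((transpose_mat P *\<^sub>v x) $ i)^2)) \<and>
     eigs A = rev (sort (map d [0..<n]))"
proof -
  obtain P D where sim: "similar_mat_wit A D P (transpose_mat P)" and diag: "diagonal_mat D"
    using spectral[OF A sym] by blast
  from similar_mat_witD2[OF A sim] have Pc: "P \<in> carrier_mat n n" and Dc: "D \<in> carrier_mat n n"
    and PP: "P * transpose_mat P = 1\<^sub>m n" and PP': "transpose_mat P * P = 1\<^sub>m n"
    and AD: "A = P * D * transpose_mat P" by auto
  define d where "d i = D $$ (i,i)" for i
  have PTc: "transpose_mat P \<in> carrier_mat n n" using Pc by simp
  have ut: "upper_triangular D" using diag Dc unfolding diagonal_mat_def upper_triangular_def by auto
  have "char_poly A = char_poly D" by (rule char_poly_similar, unfold similar_mat_def, insert sim, blast)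
  also have "\<dots> = (\<Prod>a\<leftarrow>diag_mat D. [:- a, 1:])" by (rule char_poly_upper_triangular[OF Dc ut])
  also have "diag_mat D = map d [0..<n]" unfolding diag_mat_def d_def using Dc by simp
  finally have cp: "char_poly A = (\<Prod>a\<leftarrow>map d [0..<n]. [:- a, 1:])" .
  have "char_poly A = (\<Prod>a\<leftarrow>rev (sort (map d [0..<n])). [:- a, 1:])"
    unfolding cp by (rule prod_list_perm, simp)
  moreover have "sorted_wrt (\<ge>) (rev (sort (map d [0..<n])))" by (simp add: sorted_wrt_rev)
  ultimately have eigs: "eigs A = rev (sort (map d [0..<n]))"
    using A by (intro eigs_unique, auto)
  have quad: "x \<bullet> (A *\<^sub>v x) = (\<Sum>i<n. d i * ((transpose_mat P *\<^sub>v x) $ i)^2) \<and>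
                           x \<bullet> x = (\<Sum>i<n. ((transpose_mat P *\<^sub>v x) $ i)^2)"
    if x: "x \<in> carrier_vec n" for x
  proof -
    define y where "y = transpose_mat P *\<^sub>v x"
    have yc: "y \<in> carrier_vec n" unfolding y_def using PTc x by simp
    have Ax: "A *\<^sub>v x = P *\<^sub>v (D *\<^sub>v y)"
    proof -
      have "A *\<^sub>v x = (P * D) *\<^sub>v (transpose_mat P *\<^sub>v x)" unfolding AD
        by (rule assoc_mult_mat_vec, insert Pc Dc x, auto)
      also have "\<dots> = P *\<^sub>v (D *\<^sub>v y)" unfolding y_def
        by (rule assoc_mult_mat_vec, insert Pc Dc PTc x, auto)
      finally show ?thesis .
    qed
    have xP: "x = P *\<^sub>v y"
    proof -
      have "P *\<^sub>v y = (P * transpose_mat P) *\<^sub>v x" unfolding y_def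
        by (rule assoc_mult_mat_vec[symmetric], insert Pc x, auto)
      thus ?thesis unfolding PP using x by simp
    qed
    have "x \<bullet> (A *\<^sub>v x) = (transpose_mat P *\<^sub>v x) \<bullet> (D *\<^sub>v y)" unfolding Ax
      by (rule transpose_vec_mult_scalar[symmetric], insert Pc Dc yc x, auto)
    also have "\<dots> = y \<bullet> (D *\<^sub>v y)" unfolding y_def ..
    also have "\<dots> = (\<Sum>i<n. d i * (y $ i)^2)"
    proof -
      have Dy: "(D *\<^sub>v y) $ i = d i * y $ i" if i: "i < n" for i
      proof -
        have "(D *\<^sub>v y) $ i = (\<Sum>j<n. D $$ (i,j) * y $ j)"
          using Dc yc i by (auto simp: mult_mat_vec_def scalar_prod_def lessThan_atLeast0 intro!: sum.cong)
        also have "\<dots> = (\<Sum>j<n. if i = j then d i * y $ j else 0)"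
          by (rule sum.cong, insert diag Dc i, auto simp: diagonal_mat_def d_def)
        also have "\<dots> = d i * y $ i" using i by (subst sum.delta'[OF finite_lessThan], simp)
        finally show ?thesis .
      qed
      show ?thesis using yc Dc Dy by (auto simp: scalar_prod_def lessThan_atLeast0 power2_eq_square intro!: sum.cong)
    qed
    finally have q1: "x \<bullet> (A *\<^sub>v x) = (\<Sum>i<n. d i * (y $ i)^2)" .
    have "x \<bullet> x = x \<bullet> (P *\<^sub>v y)" using xP by simp
    also have "\<dots> = y \<bullet> y" unfolding y_def
      by (rule transpose_vec_mult_scalar[symmetric], insert Pc yc x, auto simp: y_def)
    also have "\<dots> = (\<Sum>i<n. (y $ i)^2)" using yc by (auto simp: scalar_prod_def lessThan_atLeast0 power2_eq_square)
    finally show ?thesis using q1 unfolding y_def by simp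
  qed
  show ?thesis using Pc PP quad eigs by blast
qed

lemma exists_orth:
  fixes gs :: "real vec list"
  assumes gs: "set gs \<subseteq> carrier_vec n" and len: "length gs < n"
  shows "\<exists>x \<in> carrier_vec n. x \<noteq> 0\<^sub>v n \<and> (\<forall>g\<in>set gs. g \<bullet> x = 0)"
proof -
  define c where "c i = (if i < length gs then gs ! i else 0\<^sub>v n)" for i
  define M where "M = mat\<^sub>r n n (\<lambda>i. if i = n - 1 then 0\<^sub>v n else c i)"
  have cc: "c \<in> {0..<n} \<rightarrow> carrier_vec n" using gs nth_mem unfolding c_def by fastforce
  have "det M = 0" unfolding M_def by (rule det_row_0[OF _ cc], insert len, auto)
  moreover have Mc: "M \<in> carrier_mat n n" unfolding M_def by simp
  ultimately obtain v where v: "v \<in> carrier_vec n" "v \<noteq> 0\<^sub>v n" "M *\<^sub>v v = 0\<^sub>v n"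
    using det_0_iff_vec_prod_zero[OF Mc] by blast
  have "\<forall>g\<in>set gs. g \<bullet> v = 0"
  proof
    fix g assume "g \<in> set gs"
    then obtain i where i: "i < length gs" "g = gs ! i" by (auto simp: in_set_conv_nth)
    have gc: "g \<in> carrier_vec n" using gs i by auto
    have "(M *\<^sub>v v) $ i = 0" using v len i by simp
    moreover have "(M *\<^sub>v v) $ i = row M i \<bullet> v" using Mc len i by simp
    moreover have "row M i = g" unfolding M_def using len i gc by (subst row_mat_of_row_fun, auto simp: c_def)
    ultimately show "g \<bullet> v = 0" by simp
  qed
  thus ?thesis using v by blast
qed

lemma core_orth:
  fixes P :: "real mat"
  assumes Pc: "P \<in> carrier_mat n n" and fs: "set fs \<subseteq> carrier_vec n" and T: "T \<subseteq> {..<n}"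
    and len: "length fs + card T < n"
  shows "\<exists>x \<in> carrier_vec n. x \<noteq> 0\<^sub>v n \<and> (\<forall>f\<in>set fs. f \<bullet> x = 0) \<and>
     (\<forall>i\<in>T. (transpose_mat P *\<^sub>v x) $ i = 0)"
proof -
  have fT: "finite T" using T finite_subset by blast
  define gs where "gs = fs @ map (col P) (sorted_list_of_set T)"
  have "set gs \<subseteq> carrier_vec n" using fs Pc T fT unfolding gs_def by auto
  moreover have "length gs < n" using len fT unfolding gs_def by simp
  ultimately obtain x where x: "x \<in> carrier_vec n" "x \<noteq> 0\<^sub>v n" "\<forall>g\<in>set gs. g \<bullet> x = 0"
    using exists_orth by blast
  have "\<forall>i\<in>T. (transpose_mat P *\<^sub>v x) $ i = 0"
  proof
    fix i assume i: "i \<in> T"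
    hence "col P i \<in> set gs" using fT unfolding gs_def by auto
    hence "col P i \<bullet> x = 0" using x by auto
    thus "(transpose_mat P *\<^sub>v x) $ i = 0" using i T Pc by auto
  qed
  thus ?thesis using x unfolding gs_def by auto
qed

lemma count_transfer:
  fixes d :: "nat \<Rightarrow> real"
  shows "card {j. j < n \<and> Q (rev (sort (map d [0..<n])) ! j)} = card {i. i < n \<and> Q (d i)}"
proof -
  let ?ds = "map d [0..<n]"
  have "card {j. j < n \<and> Q (rev (sort ?ds) ! j)} = length (filter Q (rev (sort ?ds)))"
    by (simp add: length_filter_conv_card)
  also have "\<dots> = length (filter Q ?ds)"
  proof -
    have "mset (filter Q (rev (sort ?ds))) = mset (filter Q ?ds)" by simp
    thus ?thesis by (metis size_mset)
  qed
  also have "\<dots> = card {i. i < n \<and> Q (?ds ! i)}" by (simp add: length_filter_conv_card)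
  also have "\<dots> = card {i. i < n \<and> Q (d i)}" by (rule arg_cong[where f = card], auto)
  finally show ?thesis .
qed

lemma list_low:
  fixes es :: "real list"
  assumes so: "sorted (rev es)" and n: "length es = n"
    and up: "\<And>x y. Q x \<Longrightarrow> x \<le> y \<Longrightarrow> Q y"
    and k: "0 < k" and cnt: "card {j. j < n \<and> Q (es ! j)} \<ge> k"
  shows "Q (es ! (k - 1))"
proof (rule ccontr)
  assume nq: "\<not> Q (es ! (k - 1))"
  have "{j. j < n \<and> Q (es ! j)} \<subseteq> {..<k-1}"
  proof
    fix j assume j: "j \<in> {j. j < n \<and> Q (es ! j)}"
    show "j \<in> {..<k-1}"
    proof (rule ccontr)
      assume "j \<notin> {..<k-1}"
      hence "k - 1 \<le> j" by simp
      hence "es ! j \<le> es ! (k - 1)" using sorted_rev_nth_mono[OF so] j n by auto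
      thus False using up[of "es ! j" "es ! (k-1)"] j nq by auto
    qed
  qed
  hence "card {j. j < n \<and> Q (es ! j)} \<le> k - 1" by (metis card_lessThan card_mono finite_lessThan)
  thus False using cnt k by linarith
qed

lemma list_up:
  fixes es :: "real list"
  assumes so: "sorted (rev es)" and n: "length es = n"
    and up: "\<And>x y. Q x \<Longrightarrow> x \<le> y \<Longrightarrow> Q y"
    and r: "r < n" and cnt: "card {j. j < n \<and> Q (es ! j)} \<le> r"
  shows "\<not> Q (es ! r)"
proof
  assume q: "Q (es ! r)"
  have "{..r} \<subseteq> {j. j < n \<and> Q (es ! j)}"
  proof
    fix j assume "j \<in> {..r}"
    hence j: "j \<le> r" by simp
    hence "es ! r \<le> es ! j" using sorted_rev_nth_mono[OF so] r n by auto
    thus "j \<in> {j. j < n \<and> Q (es ! j)}" using up[OF q] j r by auto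
  qed
  hence "card {..r} \<le> card {j. j < n \<and> Q (es ! j)}" by (rule card_mono[rotated], auto)
  thus False using cnt by simp
qed

lemma exists_nonzero_coord:
  fixes y :: "nat \<Rightarrow> real"
  assumes "(\<Sum>i<n. (y i)^2) > 0"
  shows "\<exists>i<n. y i \<noteq> 0"
  using assms by (metis (no_types, lifting) lessThan_iff power_zero_numeral sum.neutral less_irrefl)

lemma sum_weighted_pos:
  fixes w y :: "nat \<Rightarrow> real"
  assumes nn: "\<And>i. i < n \<Longrightarrow> 0 \<le> w i * (y i)^2" and i0: "i0 < n" and pos: "0 < w i0 * (y i0)^2"
  shows "(\<Sum>i<n. w i * (y i)^2) > 0"
proof -
  have "w i0 * (y i0)^2 \<le> (\<Sum>i<n. w i * (y i)^2)" by (rule member_le_sum, insert i0 nn, auto)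
  thus ?thesis using pos by linarith
qed

lemma var_lower:
  fixes A :: "real mat"
  assumes A: "A \<in> carrier_mat n n" and sym: "transpose_mat A = A" and fs: "set fs \<subseteq> carrier_vec n"
    and H: "\<And>x. x \<in> carrier_vec n \<Longrightarrow> (\<forall>f\<in>set fs. f \<bullet> x = 0) \<Longrightarrow> c * (x \<bullet> x) \<le> x \<bullet> (A *\<^sub>v x)"
    and k: "0 < k" "k + length fs \<le> n"
  shows "c \<le> lam A k"
proof -
  obtain P d where Pc: "P \<in> carrier_mat n n" and
    quad: "\<And>x. x \<in> carrier_vec n \<Longrightarrow> x \<bullet> (A *\<^sub>v x) = (\<Sum>i<n. d i * ((transpose_mat P *\<^sub>v x) $ i)^2) \<and>
                           x \<bullet> x = (\<Sum>i<n. ((transpose_mat P *\<^sub>v x) $ i)^2)"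
    and eigs: "eigs A = rev (sort (map d [0..<n]))"
    using spectral_data[OF A sym] by blast
  define S where "S = {i. i < n \<and> c \<le> d i}"
  have "card S \<ge> k"
  proof (rule ccontr)
    assume "\<not> ?thesis"
    hence "length fs + card S < n" using k by linarith
    then obtain x where x: "x \<in> carrier_vec n" "x \<noteq> 0\<^sub>v n" "\<forall>f\<in>set fs. f \<bullet> x = 0"
      "\<forall>i\<in>S. (transpose_mat P *\<^sub>v x) $ i = 0"
      using core_orth[OF Pc fs, of S] unfolding S_def by auto
    define y where "y i = (transpose_mat P *\<^sub>v x) $ i" for i
    have q: "x \<bullet> (A *\<^sub>v x) = (\<Sum>i<n. d i * (y i)^2)" "x \<bullet> x = (\<Sum>i<n. (y i)^2)"
      using quad[OF x(1)] unfolding y_def by auto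
    have "x \<bullet> x > 0" using vec_sq_pos[OF x(1,2)] .
    then obtain i0 where i0: "i0 < n" "y i0 \<noteq> 0" using exists_nonzero_coord q(2) by auto
    have "(\<Sum>i<n. (c - d i) * (y i)^2) > 0"
    proof (rule sum_weighted_pos[OF _ i0(1)])
      fix i assume i: "i < n"
      show "0 \<le> (c - d i) * (y i)^2"
      proof (cases "i \<in> S")
        case True thus ?thesis using x(4) unfolding y_def by auto
      next
        case False thus ?thesis using i unfolding S_def by auto
      qed
    next
      have "i0 \<notin> S" using i0 x(4) unfolding y_def by auto
      thus "0 < (c - d i0) * (y i0)^2" using i0 unfolding S_def by auto
    qed
    moreover have "(\<Sum>i<n. (c - d i) * (y i)^2) = c * (x \<bullet> x) - x \<bullet> (A *\<^sub>v x)"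
      unfolding q by (simp add: algebra_simps sum_subtractf sum_distrib_left)
    ultimately show False using H[OF x(1,3)] by linarith
  qed
  hence cnt: "card {j. j < n \<and> c \<le> rev (sort (map d [0..<n])) ! j} \<ge> k"
    unfolding count_transfer S_def .
  have "c \<le> rev (sort (map d [0..<n])) ! (k - 1)"
    by (rule list_low[OF _ _ _ k(1) cnt], auto)
  thus ?thesis unfolding lam_def eigs .
qed

lemma var_lower_strict:
  fixes A :: "real mat"
  assumes A: "A \<in> carrier_mat n n" and sym: "transpose_mat A = A" and fs: "set fs \<subseteq> carrier_vec n"
    and H: "\<And>x. x \<in> carrier_vec n \<Longrightarrow> x \<noteq> 0\<^sub>v n \<Longrightarrow> (\<forall>f\<in>set fs. f \<bullet> x = 0) \<Longrightarrow> c * (x \<bullet> x) < x \<bullet> (A *\<^sub>v x)"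
    and k: "0 < k" "k + length fs \<le> n"
  shows "c < lam A k"
proof -
  obtain P d where Pc: "P \<in> carrier_mat n n" and
    quad: "\<And>x. x \<in> carrier_vec n \<Longrightarrow> x \<bullet> (A *\<^sub>v x) = (\<Sum>i<n. d i * ((transpose_mat P *\<^sub>v x) $ i)^2) \<and>
                           x \<bullet> x = (\<Sum>i<n. ((transpose_mat P *\<^sub>v x) $ i)^2)"
    and eigs: "eigs A = rev (sort (map d [0..<n]))"
    using spectral_data[OF A sym] by blast
  define S where "S = {i. i < n \<and> c < d i}"
  have "card S \<ge> k"
  proof (rule ccontr)
    assume "\<not> ?thesis"
    hence "length fs + card S < n" using k by linarith
    then obtain x where x: "x \<in> carrier_vec n" "x \<noteq> 0\<^sub>v n" "\<forall>f\<in>set fs. f \<bullet> x = 0"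
      "\<forall>i\<in>S. (transpose_mat P *\<^sub>v x) $ i = 0"
      using core_orth[OF Pc fs, of S] unfolding S_def by auto
    define y where "y i = (transpose_mat P *\<^sub>v x) $ i" for i
    have q: "x \<bullet> (A *\<^sub>v x) = (\<Sum>i<n. d i * (y i)^2)" "x \<bullet> x = (\<Sum>i<n. (y i)^2)"
      using quad[OF x(1)] unfolding y_def by auto
    have "(\<Sum>i<n. (c - d i) * (y i)^2) \<ge> 0"
    proof (rule sum_nonneg)
      fix i assume i: "i \<in> {..<n}"
      show "0 \<le> (c - d i) * (y i)^2"
      proof (cases "i \<in> S")
        case True thus ?thesis using x(4) unfolding y_def by auto
      next
        case False thus ?thesis using i unfolding S_def by auto
      qed
    qed
    moreover have "(\<Sum>i<n. (c - d i) * (y i)^2) = c * (x \<bullet> x) - x \<bullet> (A *\<^sub>v x)"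
      unfolding q by (simp add: algebra_simps sum_subtractf sum_distrib_left)
    ultimately show False using H[OF x(1,2,3)] by linarith
  qed
  hence cnt: "card {j. j < n \<and> c < rev (sort (map d [0..<n])) ! j} \<ge> k"
    unfolding count_transfer S_def .
  have "c < rev (sort (map d [0..<n])) ! (k - 1)"
    by (rule list_low[OF _ _ _ k(1) cnt], auto)
  thus ?thesis unfolding lam_def eigs .
qed

lemma var_upper:
  fixes A :: "real mat"
  assumes A: "A \<in> carrier_mat n n" and sym: "transpose_mat A = A" and fs: "set fs \<subseteq> carrier_vec n"
    and H: "\<And>x. x \<in> carrier_vec n \<Longrightarrow> (\<forall>f\<in>set fs. f \<bullet> x = 0) \<Longrightarrow> x \<bullet> (A *\<^sub>v x) \<le> c * (x \<bullet> x)"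
    and r: "length fs < n"
  shows "lam A (length fs + 1) \<le> c"
proof -
  obtain P d where Pc: "P \<in> carrier_mat n n" and
    quad: "\<And>x. x \<in> carrier_vec n \<Longrightarrow> x \<bullet> (A *\<^sub>v x) = (\<Sum>i<n. d i * ((transpose_mat P *\<^sub>v x) $ i)^2) \<and>
                           x \<bullet> x = (\<Sum>i<n. ((transpose_mat P *\<^sub>v x) $ i)^2)"
    and eigs: "eigs A = rev (sort (map d [0..<n]))"
    using spectral_data[OF A sym] by blast
  define S where "S = {i. i < n \<and> c < d i}"
  define T where "T = {i. i < n \<and> \<not> c < d i}"
  have fin: "finite S" "finite T" unfolding S_def T_def by auto
  have ST: "card S + card T = n"
  proof -
    have "card S + card T = card (S \<union> T)" by (rule card_Un_disjoint[symmetric], insert fin, auto simp: S_def T_def)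
    also have "S \<union> T = {..<n}" unfolding S_def T_def by auto
    finally show ?thesis by simp
  qed
  have "card S \<le> length fs"
  proof (rule ccontr)
    assume "\<not> ?thesis"
    hence "length fs + card T < n" using ST by linarith
    then obtain x where x: "x \<in> carrier_vec n" "x \<noteq> 0\<^sub>v n" "\<forall>f\<in>set fs. f \<bullet> x = 0"
      "\<forall>i\<in>T. (transpose_mat P *\<^sub>v x) $ i = 0"
      using core_orth[OF Pc fs, of T] unfolding T_def by auto
    define y where "y i = (transpose_mat P *\<^sub>v x) $ i" for i
    have q: "x \<bullet> (A *\<^sub>v x) = (\<Sum>i<n. d i * (y i)^2)" "x \<bullet> x = (\<Sum>i<n. (y i)^2)"
      using quad[OF x(1)] unfolding y_def by auto
    have "x \<bullet> x > 0" using vec_sq_pos[OF x(1,2)] .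
    then obtain i0 where i0: "i0 < n" "y i0 \<noteq> 0" using exists_nonzero_coord q(2) by auto
    have "(\<Sum>i<n. (d i - c) * (y i)^2) > 0"
    proof (rule sum_weighted_pos[OF _ i0(1)])
      fix i assume i: "i < n"
      show "0 \<le> (d i - c) * (y i)^2"
      proof (cases "i \<in> T")
        case True thus ?thesis using x(4) unfolding y_def by auto
      next
        case False thus ?thesis using i unfolding T_def by auto
      qed
    next
      have "i0 \<notin> T" using i0 x(4) unfolding y_def by auto
      thus "0 < (d i0 - c) * (y i0)^2" using i0 unfolding T_def by auto
    qed
    moreover have "(\<Sum>i<n. (d i - c) * (y i)^2) = x \<bullet> (A *\<^sub>v x) - c * (x \<bullet> x)"
      unfolding q by (simp add: algebra_simps sum_subtractf sum_distrib_left)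
    ultimately show False using H[OF x(1,3)] by linarith
  qed
  hence cnt: "card {j. j < n \<and> c < rev (sort (map d [0..<n])) ! j} \<le> length fs"
    unfolding count_transfer S_def .
  have "\<not> c < rev (sort (map d [0..<n])) ! (length fs)"
    by (rule list_up[OF _ _ _ r cnt], auto)
  thus ?thesis unfolding lam_def eigs by simp
qed

lemma var_upper_strict:
  fixes A :: "real mat"
  assumes A: "A \<in> carrier_mat n n" and sym: "transpose_mat A = A" and fs: "set fs \<subseteq> carrier_vec n"
    and H: "\<And>x. x \<in> carrier_vec n \<Longrightarrow> x \<noteq> 0\<^sub>v n \<Longrightarrow> (\<forall>f\<in>set fs. f \<bullet> x = 0) \<Longrightarrow> x \<bullet> (A *\<^sub>v x) < c * (x \<bullet> x)"
    and r: "length fs < n"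
  shows "lam A (length fs + 1) < c"
proof -
  obtain P d where Pc: "P \<in> carrier_mat n n" and
    quad: "\<And>x. x \<in> carrier_vec n \<Longrightarrow> x \<bullet> (A *\<^sub>v x) = (\<Sum>i<n. d i * ((transpose_mat P *\<^sub>v x) $ i)^2) \<and>
                           x \<bullet> x = (\<Sum>i<n. ((transpose_mat P *\<^sub>v x) $ i)^2)"
    and eigs: "eigs A = rev (sort (map d [0..<n]))"
    using spectral_data[OF A sym] by blast
  define S where "S = {i. i < n \<and> c \<le> d i}"
  define T where "T = {i. i < n \<and> \<not> c \<le> d i}"
  have fin: "finite S" "finite T" unfolding S_def T_def by auto
  have ST: "card S + card T = n"
  proof -
    have "card S + card T = card (S \<union> T)" by (rule card_Un_disjoint[symmetric], insert fin, auto simp: S_def T_def)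
    also have "S \<union> T = {..<n}" unfolding S_def T_def by auto
    finally show ?thesis by simp
  qed
  have "card S \<le> length fs"
  proof (rule ccontr)
    assume "\<not> ?thesis"
    hence "length fs + card T < n" using ST by linarith
    then obtain x where x: "x \<in> carrier_vec n" "x \<noteq> 0\<^sub>v n" "\<forall>f\<in>set fs. f \<bullet> x = 0"
      "\<forall>i\<in>T. (transpose_mat P *\<^sub>v x) $ i = 0"
      using core_orth[OF Pc fs, of T] unfolding T_def by auto
    define y where "y i = (transpose_mat P *\<^sub>v x) $ i" for i
    have q: "x \<bullet> (A *\<^sub>v x) = (\<Sum>i<n. d i * (y i)^2)" "x \<bullet> x = (\<Sum>i<n. (y i)^2)"
      using quad[OF x(1)] unfolding y_def by auto
    have "(\<Sum>i<n. (d i - c) * (y i)^2) \<ge> 0"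
    proof (rule sum_nonneg)
      fix i assume i: "i \<in> {..<n}"
      show "0 \<le> (d i - c) * (y i)^2"
      proof (cases "i \<in> T")
        case True thus ?thesis using x(4) unfolding y_def by auto
      next
        case False thus ?thesis using i unfolding T_def by auto
      qed
    qed
    moreover have "(\<Sum>i<n. (d i - c) * (y i)^2) = x \<bullet> (A *\<^sub>v x) - c * (x \<bullet> x)"
      unfolding q by (simp add: algebra_simps sum_subtractf sum_distrib_left)
    ultimately show False using H[OF x(1,2,3)] by linarith
  qed
  hence cnt: "card {j. j < n \<and> c \<le> rev (sort (map d [0..<n])) ! j} \<le> length fs"
    unfolding count_transfer S_def .
  have "\<not> c \<le> rev (sort (map d [0..<n])) ! (length fs)"
    by (rule list_up[OF _ _ _ r cnt], auto)
  thus ?thesis unfolding lam_def eigs by simp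
qed

definition QF :: "nat \<Rightarrow> (nat \<Rightarrow> nat \<Rightarrow> bool) \<Rightarrow> real vec \<Rightarrow> real" where
  "QF n E x = (\<Sum>i<n. \<Sum>j<n. if i \<noteq> j \<and> E i j then (x $ i - x $ j)^2 else 0)"

lemma laplacian_carrier: "laplacian n E \<in> carrier_mat n n"
  unfolding laplacian_def by simp

lemma laplacian_sym:
  assumes sym: "\<And>i j. E i j = E j i"
  shows "transpose_mat (laplacian n E) = laplacian n E"
  unfolding laplacian_def by (rule eq_matI, auto simp: sym)

lemma laplacian_mult:
  assumes x: "x \<in> carrier_vec n" and i: "i < n"
  shows "(laplacian n E *\<^sub>v x) $ i = (\<Sum>j<n. if i \<noteq> j \<and> E i j then x $ i - x $ j else 0)"
proof -
  let ?L = "laplacian n E"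
  have "(?L *\<^sub>v x) $ i = (\<Sum>j<n. ?L $$ (i,j) * x $ j)"
    using x i by (auto simp: laplacian_def mult_mat_vec_def scalar_prod_def lessThan_atLeast0 intro!: sum.cong)
  also have "\<dots> = (\<Sum>j<n. (if i = j then real (card {k. k < n \<and> k \<noteq> i \<and> E i k}) * x $ i else 0)
       - (if i \<noteq> j \<and> E i j then x $ j else 0))"
    using i by (intro sum.cong refl, auto simp: laplacian_def)
  also have "\<dots> = real (card {k. k < n \<and> k \<noteq> i \<and> E i k}) * x $ i - (\<Sum>j<n. if i \<noteq> j \<and> E i j then x $ j else 0)"
    using i by (simp add: sum_subtractf sum.delta'[OF finite_lessThan])
  also have "real (card {k. k < n \<and> k \<noteq> i \<and> E i k}) = (\<Sum>j<n. if i \<noteq> j \<and> E i j then 1 else 0)"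
  proof -
    have "(\<Sum>j<n. if i \<noteq> j \<and> E i j then 1 else 0) = (\<Sum>j\<in>{k. k < n \<and> k \<noteq> i \<and> E i k}. (1::real))"
      by (subst sum.inter_filter[symmetric], simp, rule sum.cong, auto)
    thus ?thesis by simp
  qed
  also have "(\<Sum>j<n. if i \<noteq> j \<and> E i j then 1 else 0) * x $ i - (\<Sum>j<n. if i \<noteq> j \<and> E i j then x $ j else 0)
     = (\<Sum>j<n. if i \<noteq> j \<and> E i j then x $ i - x $ j else 0)"
    by (simp add: sum_distrib_right sum_subtractf[symmetric] if_distrib cong: if_cong)
  finally show ?thesis .
qed

lemma laplacian_quad:
  assumes sym: "\<And>i j. E i j = E j i" and x: "x \<in> carrier_vec n"
  shows "x \<bullet> (laplacian n E *\<^sub>v x) = QF n E x / 2"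
proof -
  let ?c = "\<lambda>i j. i \<noteq> j \<and> E i j"
  have "x \<bullet> (laplacian n E *\<^sub>v x) = (\<Sum>i<n. x $ i * (laplacian n E *\<^sub>v x) $ i)"
    using x by (auto simp: scalar_prod_def lessThan_atLeast0 laplacian_def)
  also have "\<dots> = (\<Sum>i<n. \<Sum>j<n. if ?c i j then x $ i * (x $ i - x $ j) else 0)"
    by (rule sum.cong, simp, subst laplacian_mult[OF x], auto simp: sum_distrib_left if_distrib cong: if_cong)
  finally have e1: "x \<bullet> (laplacian n E *\<^sub>v x) = (\<Sum>i<n. \<Sum>j<n. if ?c i j then x $ i * (x $ i - x $ j) else 0)" .
  have e2: "(\<Sum>i<n. \<Sum>j<n. if ?c i j then x $ i * (x $ i - x $ j) else 0) =
            (\<Sum>i<n. \<Sum>j<n. if ?c i j then x $ j * (x $ j - x $ i) else 0)"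
    by (subst sum.swap, rule sum.cong, simp, rule sum.cong, auto simp: sym)
  have "QF n E x = (\<Sum>i<n. \<Sum>j<n. (if ?c i j then x $ i * (x $ i - x $ j) else 0) +
                                     (if ?c i j then x $ j * (x $ j - x $ i) else 0))"
    unfolding QF_def by (intro sum.cong refl, auto simp: power2_eq_square algebra_simps)
  also have "\<dots> = 2 * (x \<bullet> (laplacian n E *\<^sub>v x))"
    unfolding sum.distrib e1 e2[symmetric] by simp
  finally show ?thesis by simp
qed

lemma QF_nonneg: "QF n E x \<ge> 0"
  unfolding QF_def by (intro sum_nonneg, auto)

definition inK :: "nat \<Rightarrow> nat \<Rightarrow> nat \<Rightarrow> bool" where
  "inK lo hi i = (lo \<le> i \<and> i \<le> hi)"
definition adjI :: "nat \<Rightarrow> nat \<Rightarrow> nat \<Rightarrow> nat \<Rightarrow> bool" where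
  "adjI lo hi i j = (i \<noteq> j \<and> (i + 1 = j \<or> j + 1 = i \<or> (inK lo hi i \<and> inK lo hi j)))"
definition Rr :: "nat \<Rightarrow> nat \<Rightarrow> nat \<Rightarrow> nat \<Rightarrow> bool" where
  "Rr lo hi i j = ((i + 1 = j \<or> j + 1 = i) \<and> \<not> (inK lo hi i \<and> inK lo hi j))"
definition ind :: "nat \<Rightarrow> nat \<Rightarrow> nat \<Rightarrow> real" where
  "ind lo hi i = (if inK lo hi i then 1 else 0)"
definition rdeg :: "nat \<Rightarrow> nat \<Rightarrow> nat \<Rightarrow> nat \<Rightarrow> real" where
  "rdeg lo hi n i = (\<Sum>j<n. if Rr lo hi i j then 1 else 0)"

lemma adjI_sym: "adjI lo hi i j = adjI lo hi j i" unfolding adjI_def by auto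
lemma Rr_sym: "Rr lo hi i j = Rr lo hi j i" unfolding Rr_def by auto

definition QKf :: "nat \<Rightarrow> nat \<Rightarrow> nat \<Rightarrow> real vec \<Rightarrow> real" where
  "QKf lo hi n x = (\<Sum>i<n. \<Sum>j<n. ind lo hi i * ind lo hi j * (x $ i - x $ j)^2)"
definition QRf :: "nat \<Rightarrow> nat \<Rightarrow> nat \<Rightarrow> real vec \<Rightarrow> real" where
  "QRf lo hi n x = (\<Sum>i<n. \<Sum>j<n. if Rr lo hi i j then (x $ i - x $ j)^2 else 0)"
definition PRf :: "nat \<Rightarrow> nat \<Rightarrow> nat \<Rightarrow> real vec \<Rightarrow> real" where
  "PRf lo hi n x = (\<Sum>i<n. \<Sum>j<n. if Rr lo hi i j then (x $ i + x $ j)^2 else 0)"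

lemma QF_split: "QF n (adjI lo hi) x = QKf lo hi n x + QRf lo hi n x"
proof -
  have "QF n (adjI lo hi) x = (\<Sum>i<n. \<Sum>j<n. ind lo hi i * ind lo hi j * (x $ i - x $ j)^2 +
       (if Rr lo hi i j then (x $ i - x $ j)^2 else 0))"
    unfolding QF_def by (intro sum.cong refl, auto simp: adjI_def Rr_def ind_def)
  also have "\<dots> = QKf lo hi n x + QRf lo hi n x"
    unfolding QKf_def QRf_def by (simp add: sum.distrib)
  finally show ?thesis .
qed

lemma QK_formula:
  "QKf lo hi n x = 2 * (\<Sum>i<n. ind lo hi i) * (\<Sum>i<n. ind lo hi i * (x $ i)^2)
      - 2 * (\<Sum>i<n. ind lo hi i * x $ i)^2"
proof -
  let ?a = "\<lambda>i. ind lo hi i"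
  have "QKf lo hi n x = (\<Sum>i<n. \<Sum>j<n. ?a j * (?a i * (x $ i)^2) + ?a i * (?a j * (x $ j)^2)
        - 2 * ((?a i * x $ i) * (?a j * x $ j)))"
    unfolding QKf_def by (intro sum.cong refl, simp add: power2_eq_square algebra_simps)
  also have "\<dots> = (\<Sum>i<n. \<Sum>j<n. ?a j * (?a i * (x $ i)^2)) + (\<Sum>i<n. \<Sum>j<n. ?a i * (?a j * (x $ j)^2))
        - 2 * (\<Sum>i<n. \<Sum>j<n. (?a i * x $ i) * (?a j * x $ j))"
    by (simp only: sum.distrib sum_subtractf sum_distrib_left)
  also have "(\<Sum>i<n. \<Sum>j<n. ?a j * (?a i * (x $ i)^2)) = (\<Sum>j<n. ?a j) * (\<Sum>i<n. ?a i * (x $ i)^2)"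
    by (simp only: sum_distrib_right[symmetric] sum_distrib_left[symmetric])
  also have "(\<Sum>i<n. \<Sum>j<n. ?a i * (?a j * (x $ j)^2)) = (\<Sum>i<n. ?a i) * (\<Sum>j<n. ?a j * (x $ j)^2)"
    by (simp only: sum_distrib_right[symmetric] sum_distrib_left[symmetric])
  also have "(\<Sum>i<n. \<Sum>j<n. (?a i * x $ i) * (?a j * x $ j)) = (\<Sum>i<n. ?a i * x $ i) * (\<Sum>j<n. ?a j * x $ j)"
    by (simp only: sum_product)
  finally show ?thesis by (simp add: power2_eq_square)
qed

lemma QR_identity:
  "QRf lo hi n x = 4 * (\<Sum>i<n. rdeg lo hi n i * (x $ i)^2) - PRf lo hi n x"
proof -
  let ?R = "Rr lo hi"
  have "QRf lo hi n x = (\<Sum>i<n. \<Sum>j<n. 2 * (if ?R i j then (x $ i)^2 else 0) + 2 * (if ?R i j then (x $ j)^2 else 0)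
        - (if ?R i j then (x $ i + x $ j)^2 else 0))"
    unfolding QRf_def by (intro sum.cong refl, auto simp: power2_eq_square algebra_simps)
  also have "\<dots> = 2 * (\<Sum>i<n. \<Sum>j<n. if ?R i j then (x $ i)^2 else 0) + 2 * (\<Sum>i<n. \<Sum>j<n. if ?R i j then (x $ j)^2 else 0)
        - PRf lo hi n x"
    unfolding PRf_def by (simp add: sum.distrib sum_subtractf sum_distrib_left)
  also have "(\<Sum>i<n. \<Sum>j<n. if ?R i j then (x $ j)^2 else 0) = (\<Sum>i<n. \<Sum>j<n. if ?R i j then (x $ i)^2 else 0)"
    by (subst sum.swap, intro sum.cong refl, auto simp: Rr_sym)
  also have "(\<Sum>i<n. \<Sum>j<n. if ?R i j then (x $ i)^2 else 0) = (\<Sum>i<n. rdeg lo hi n i * (x $ i)^2)"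
    unfolding rdeg_def sum_distrib_right by (intro sum.cong refl, auto)
  finally show ?thesis by simp
qed

lemma PR_nonneg: "PRf lo hi n x \<ge> 0" unfolding PRf_def by (intro sum_nonneg, auto)
lemma QR_nonneg: "QRf lo hi n x \<ge> 0" unfolding QRf_def by (intro sum_nonneg, auto)

lemma sum_if_eq_le: "0 \<le> (a::real) \<Longrightarrow> (\<Sum>j<(n::nat). if j = c then a else 0) \<le> a"
  by (subst sum.delta[OF finite_lessThan], auto)

lemma rdeg_nonneg: "rdeg lo hi n i \<ge> 0" unfolding rdeg_def by (intro sum_nonneg, auto)

lemma rdeg_le_ab:
  "rdeg lo hi n i \<le> (if \<not> (inK lo hi i \<and> inK lo hi (i+1)) then 1 else 0)
     + (if 0 < i \<and> \<not> (inK lo hi i \<and> inK lo hi (i-1)) then 1 else 0)"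
  (is "_ \<le> ?a + ?b")
proof -
  have "rdeg lo hi n i \<le> (\<Sum>j<n. (if j = i + 1 then ?a else 0) + (if j = i - 1 then ?b else 0))"
    unfolding rdeg_def
  proof (rule sum_mono)
    fix j assume "j \<in> {..<n}"
    show "(if Rr lo hi i j then 1 else 0) \<le> (if j = i + 1 then ?a else 0) + (if j = i - 1 then ?b else 0)"
    proof (cases "Rr lo hi i j")
      case True
      hence "(i + 1 = j \<or> j + 1 = i)" and nk: "\<not> (inK lo hi i \<and> inK lo hi j)" unfolding Rr_def by auto
      show ?thesis
      proof (cases "i + 1 = j")
        case True thus ?thesis using nk by auto
      next
        case False
        hence ji: "j + 1 = i" using \<open>i + 1 = j \<or> j + 1 = i\<close> by simp
        hence "j = i - 1" "0 < i" "j \<noteq> i + 1" by auto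
        thus ?thesis using nk True by auto
      qed
    qed auto
  qed
  also have "\<dots> = (\<Sum>j<n. if j = i + 1 then ?a else 0) + (\<Sum>j<n. if j = i - 1 then ?b else 0)"
    by (rule sum.distrib)
  also have "\<dots> \<le> ?a + ?b" by (intro add_mono sum_if_eq_le, auto)
  finally show ?thesis .
qed

lemma rdeg_le2: "rdeg lo hi n i \<le> 2"
  using rdeg_le_ab[of lo hi n i] by (auto split: if_splits)

lemma rdeg_K:
  assumes "1 \<le> lo" "lo < hi" "inK lo hi i"
  shows "rdeg lo hi n i \<le> 1"
proof (cases "i < hi")
  case True
  hence "inK lo hi (i+1)" using assms unfolding inK_def by auto
  thus ?thesis using rdeg_le_ab[of lo hi n i] assms by (auto split: if_splits)
next
  case False
  hence "inK lo hi (i-1)" "0 < i" using assms unfolding inK_def by auto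
  thus ?thesis using rdeg_le_ab[of lo hi n i] assms by (auto split: if_splits)
qed

lemma rdeg_inner:
  assumes "lo < i" "i < hi"
  shows "rdeg lo hi n i = 0"
proof -
  have "inK lo hi i" "inK lo hi (i+1)" "inK lo hi (i-1)" "0 < i" using assms unfolding inK_def by auto
  hence "rdeg lo hi n i \<le> 0" using rdeg_le_ab[of lo hi n i] by auto
  thus ?thesis using rdeg_nonneg[of lo hi n i] by linarith
qed

lemma rdeg_0: "rdeg lo hi n 0 \<le> 1"
  using rdeg_le_ab[of lo hi n 0] by (auto split: if_splits)

lemma ckc_adj_sym: "ckc_adj P Q1 Q2 u v = ckc_adj P Q1 Q2 v u"
  unfolding ckc_adj_def by (auto simp: insert_commute min.commute abs_minus_commute)

lemma ckc_adj_succ: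
  fixes P Q1 Q2 u v :: int
  assumes "P \<ge> 3" "-Q1-P+2 \<le> u" "v \<le> Q2 - 1" and uv: "u + 1 = v"
  shows "ckc_adj P Q1 Q2 u v"
proof -
  have "min u v = u" "\<bar>u - v\<bar> = 1" using uv by auto
  moreover have "u \<le> -P-1 \<or> u = -P \<or> (-P+1 \<le> u \<and> u \<le> -1) \<or> u = 0 \<or> u \<ge> 1" by linarith
  ultimately show ?thesis unfolding ckc_adj_def using uv assms by (elim disjE, auto simp: doubleton_eq_iff)
qed

lemma ckc_adj_int:
  fixes P Q1 Q2 u v :: int
  assumes "P \<ge> 3" "-Q1-P+2 \<le> u" "u \<le> Q2 - 1" "-Q1-P+2 \<le> v" "v \<le> Q2 - 1"
  shows "ckc_adj P Q1 Q2 u v \<longleftrightarrow> u \<noteq> v \<and> ((-P+1 \<le> u \<and> u \<le> 0 \<and> -P+1 \<le> v \<and> v \<le> 0) \<or> u + 1 = v \<or> v + 1 = u)"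
proof
  assume "ckc_adj P Q1 Q2 u v"
  thus "u \<noteq> v \<and> ((-P+1 \<le> u \<and> u \<le> 0 \<and> -P+1 \<le> v \<and> v \<le> 0) \<or> u + 1 = v \<or> v + 1 = u)"
    unfolding ckc_adj_def doubleton_eq_iff by (auto simp: abs_if split: if_splits)
next
  assume r: "u \<noteq> v \<and> ((-P+1 \<le> u \<and> u \<le> 0 \<and> -P+1 \<le> v \<and> v \<le> 0) \<or> u + 1 = v \<or> v + 1 = u)"
  show "ckc_adj P Q1 Q2 u v"
  proof (cases "-P+1 \<le> u \<and> u \<le> 0 \<and> -P+1 \<le> v \<and> v \<le> 0")
    case True thus ?thesis using r unfolding ckc_adj_def by blast
  next
    case False
    hence "u + 1 = v \<or> v + 1 = u" using r by blast
    thus ?thesis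
    proof
      assume "u + 1 = v" thus ?thesis using ckc_adj_succ[OF assms(1) assms(2) assms(5)] by blast
    next
      assume "v + 1 = u" thus ?thesis using ckc_adj_succ[OF assms(1) assms(4) assms(3)] ckc_adj_sym[of P Q1 Q2 u v] by blast
    qed
  qed
qed

lemma ckc_adj_nat:
  fixes p q1 q2 i j :: nat
  assumes p: "p \<ge> 3" and q1: "q1 \<ge> 2" and i: "i < p + q1 + q2 - 2" and j: "j < p + q1 + q2 - 2"
  shows "ckc_adj (int p) (int q1) (int q2) (int i - int (q1 + p - 2)) (int j - int (q1 + p - 2))
     = adjI (q1 - 1) (q1 + p - 2) i j"
proof -
  have o: "int (q1 + p - 2) = int q1 + int p - 2" using p q1 by simp
  have "ckc_adj (int p) (int q1) (int q2) (int i - int (q1 + p - 2)) (int j - int (q1 + p - 2)) \<longleftrightarrow>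
     (int i - int (q1 + p - 2)) \<noteq> (int j - int (q1 + p - 2)) \<and>
     ((- int p + 1 \<le> int i - int (q1 + p - 2) \<and> int i - int (q1 + p - 2) \<le> 0 \<and>
       - int p + 1 \<le> int j - int (q1 + p - 2) \<and> int j - int (q1 + p - 2) \<le> 0) \<or>
      int i - int (q1 + p - 2) + 1 = int j - int (q1 + p - 2) \<or>
      int j - int (q1 + p - 2) + 1 = int i - int (q1 + p - 2))"
    by (rule ckc_adj_int, insert p q1 i j, auto simp: o)
  also have "\<dots> \<longleftrightarrow> adjI (q1 - 1) (q1 + p - 2) i j"
    unfolding adjI_def inK_def o using p q1 by auto
  finally show ?thesis .
qed

lemma laplacian_cong:
  assumes "\<And>i j. i < n \<Longrightarrow> j < n \<Longrightarrow> E i j = E' i j"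
  shows "laplacian n E = laplacian n E'"
proof -
  have c: "{k. k < n \<and> k \<noteq> i \<and> E i k} = {k. k < n \<and> k \<noteq> i \<and> E' i k}" if "i < n" for i
    using assms that by auto
  show ?thesis unfolding laplacian_def by (rule eq_matI, auto simp: c assms)
qed

lemma ckc_lap:
  assumes p: "p \<ge> 3" and q1: "q1 \<ge> 2"
  shows "ckc_laplacian p q1 q2 = laplacian (p + q1 + q2 - 2) (adjI (q1 - 1) (q1 + p - 2))"
  unfolding ckc_laplacian_def by (rule laplacian_cong, rule ckc_adj_nat[OF p q1], auto)

lemma lam_mono:
  fixes A :: "real mat"
  assumes A: "A \<in> carrier_mat n n" and sym: "transpose_mat A = A"
    and ij: "1 \<le> i" "i \<le> j" "j \<le> n"
  shows "lam A j \<le> lam A i"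
proof -
  obtain P d where eigs: "eigs A = rev (sort (map d [0..<n]))"
    using spectral_data[OF A sym] by blast
  have so: "sorted (rev (eigs A))" unfolding eigs by simp
  have len: "length (eigs A) = n" unfolding eigs by simp
  show ?thesis unfolding lam_def by (rule sorted_rev_nth_mono[OF so], insert ij len, auto)
qed

definition cKf :: "nat \<Rightarrow> nat \<Rightarrow> nat \<Rightarrow> real" where
  "cKf lo hi n = (\<Sum>i<n. ind lo hi i)"
definition SK1 :: "nat \<Rightarrow> nat \<Rightarrow> nat \<Rightarrow> real vec \<Rightarrow> real" where
  "SK1 lo hi n x = (\<Sum>i<n. ind lo hi i * x $ i)"

lemma cK_eq:
  assumes "lo \<le> hi" "hi < n"
  shows "cKf lo hi n = real (hi + 1 - lo)"
proof -
  have "cKf lo hi n = (\<Sum>i\<in>{..<n} \<inter> {i. inK lo hi i}. 1)"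
    unfolding cKf_def ind_def by (subst sum.inter_restrict, auto)
  also have "{..<n} \<inter> {i. inK lo hi i} = {lo..hi}" using assms unfolding inK_def by auto
  finally show ?thesis using assms by simp
qed

lemma QF_eq:
  "QF n (adjI lo hi) x = (\<Sum>i<n. (2 * cKf lo hi n * ind lo hi i + 4 * rdeg lo hi n i) * (x $ i)^2)
     - 2 * (SK1 lo hi n x)^2 - PRf lo hi n x"
proof -
  have "QF n (adjI lo hi) x = 2 * cKf lo hi n * (\<Sum>i<n. ind lo hi i * (x $ i)^2)
      - 2 * (SK1 lo hi n x)^2 + (4 * (\<Sum>i<n. rdeg lo hi n i * (x $ i)^2) - PRf lo hi n x)"
    unfolding QF_split QK_formula QR_identity cKf_def SK1_def ..
  also have "2 * cKf lo hi n * (\<Sum>i<n. ind lo hi i * (x $ i)^2) + 4 * (\<Sum>i<n. rdeg lo hi n i * (x $ i)^2)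
     = (\<Sum>i<n. (2 * cKf lo hi n * ind lo hi i + 4 * rdeg lo hi n i) * (x $ i)^2)"
    by (simp add: sum_distrib_left sum.distrib algebra_simps)
  ultimately show ?thesis by linarith
qed

lemma norm_sum: "(x :: real vec) \<in> carrier_vec n \<Longrightarrow> x \<bullet> x = (\<Sum>i<n. (x $ i)^2)"
  by (auto simp: scalar_prod_def lessThan_atLeast0 power2_eq_square intro!: sum.cong)

lemma quadL:
  "x \<in> carrier_vec n \<Longrightarrow> x \<bullet> (laplacian n (adjI lo hi) *\<^sub>v x) = QF n (adjI lo hi) x / 2"
  by (rule laplacian_quad, rule adjI_sym)

lemma ind_cases: "ind lo hi i = 0 \<or> ind lo hi i = 1" unfolding ind_def by auto

lemma F3_bound:
  assumes "1 \<le> lo" "lo < hi" "hi < n" and x: "x \<in> carrier_vec n"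
  shows "QF n (adjI lo hi) x \<le> (2 * cKf lo hi n + 4) * (x \<bullet> x)"
proof -
  have cK: "cKf lo hi n \<ge> 2" using cK_eq[of lo hi n] assms by simp
  have "QF n (adjI lo hi) x \<le> (\<Sum>i<n. (2 * cKf lo hi n * ind lo hi i + 4 * rdeg lo hi n i) * (x $ i)^2)"
    unfolding QF_eq using PR_nonneg[of lo hi n x] zero_le_power2[of "SK1 lo hi n x"] by linarith
  also have "\<dots> \<le> (\<Sum>i<n. (2 * cKf lo hi n + 4) * (x $ i)^2)"
  proof (rule sum_mono)
    fix i assume i: "i \<in> {..<n}"
    have "2 * cKf lo hi n * ind lo hi i + 4 * rdeg lo hi n i \<le> 2 * cKf lo hi n + 4"
    proof (cases "inK lo hi i")
      case True thus ?thesis using rdeg_K[of lo hi i n] assms by (simp add: ind_def)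
    next
      case False thus ?thesis using rdeg_le2[of lo hi n i] cK by (simp add: ind_def)
    qed
    thus "(2 * cKf lo hi n * ind lo hi i + 4 * rdeg lo hi n i) * (x $ i)^2 \<le> (2 * cKf lo hi n + 4) * (x $ i)^2"
      by (rule mult_right_mono, simp)
  qed
  also have "\<dots> = (2 * cKf lo hi n + 4) * (x \<bullet> x)" unfolding norm_sum[OF x] by (simp add: sum_distrib_left)
  finally show ?thesis .
qed

lemma F2_bound:
  assumes "1 \<le> lo" "lo < hi" "hi < n" "cKf lo hi n \<ge> 4" and x: "x \<in> carrier_vec n"
    and z: "x $ lo = 0" "x $ hi = 0"
  shows "QF n (adjI lo hi) x \<le> (2 * cKf lo hi n) * (x \<bullet> x)"
proof -
  have "QF n (adjI lo hi) x \<le> (\<Sum>i<n. (2 * cKf lo hi n * ind lo hi i + 4 * rdeg lo hi n i) * (x $ i)^2)"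
    unfolding QF_eq using PR_nonneg[of lo hi n x] zero_le_power2[of "SK1 lo hi n x"] by linarith
  also have "\<dots> \<le> (\<Sum>i<n. (2 * cKf lo hi n) * (x $ i)^2)"
  proof (rule sum_mono)
    fix i assume i: "i \<in> {..<n}"
    show "(2 * cKf lo hi n * ind lo hi i + 4 * rdeg lo hi n i) * (x $ i)^2 \<le> (2 * cKf lo hi n) * (x $ i)^2"
    proof (cases "inK lo hi i")
      case True
      show ?thesis
      proof (cases "i = lo \<or> i = hi")
        case True thus ?thesis using z by auto
      next
        case False
        hence "lo < i" "i < hi" using \<open>inK lo hi i\<close> unfolding inK_def by auto
        thus ?thesis using rdeg_inner[of lo i hi n] True by (simp add: ind_def)
      qed
    next
      case False
      hence "2 * cKf lo hi n * ind lo hi i + 4 * rdeg lo hi n i \<le> 2 * cKf lo hi n"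
        using rdeg_le2[of lo hi n i] assms by (simp add: ind_def)
      thus ?thesis by (rule mult_right_mono, simp)
    qed
  qed
  also have "\<dots> = (2 * cKf lo hi n) * (x \<bullet> x)" unfolding norm_sum[OF x] by (simp add: sum_distrib_left)
  finally show ?thesis .
qed

lemma F1_bound:
  assumes x: "x \<in> carrier_vec n" and z: "\<And>i. i < n \<Longrightarrow> \<not> inK lo hi i \<Longrightarrow> x $ i = 0"
    and s: "SK1 lo hi n x = 0"
  shows "(2 * cKf lo hi n) * (x \<bullet> x) \<le> QF n (adjI lo hi) x"
proof -
  have "x \<bullet> x = (\<Sum>i<n. ind lo hi i * (x $ i)^2)" unfolding norm_sum[OF x]
    by (rule sum.cong, insert z, auto simp: ind_def)
  hence "QKf lo hi n x = (2 * cKf lo hi n) * (x \<bullet> x)" unfolding QK_formula using s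
    unfolding SK1_def cKf_def by simp
  thus ?thesis unfolding QF_split using QR_nonneg[of lo hi n x] by simp
qed

lemma double_sum_zero:
  fixes f :: "nat \<Rightarrow> nat \<Rightarrow> real"
  assumes nn: "\<And>i j. 0 \<le> f i j" and s: "(\<Sum>i<n. \<Sum>j<n. f i j) = 0" and ij: "i < n" "j < n"
  shows "f i j = 0"
proof -
  have "\<forall>i\<in>{..<n}. (\<Sum>j<n. f i j) = 0"
    using s by (subst sum_nonneg_eq_0_iff[symmetric], auto intro: sum_nonneg nn)
  hence "(\<Sum>j<n. f i j) = 0" using ij by auto
  hence "\<forall>j\<in>{..<n}. f i j = 0" by (subst sum_nonneg_eq_0_iff[symmetric], auto intro: nn)
  thus ?thesis using ij by auto
qed

lemma vec_zero_if:
  fixes x :: "real vec"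
  assumes x: "x \<in> carrier_vec n" and z: "\<And>i. i < n \<Longrightarrow> x $ i = 0"
  shows "x = 0\<^sub>v n"
  by (rule eq_vecI, insert x z, auto)

lemma F6_pos:
  assumes x: "x \<in> carrier_vec n" and x0: "x \<noteq> 0\<^sub>v n" and z: "x $ 0 = 0"
  shows "QF n (adjI lo hi) x > 0"
proof (rule ccontr)
  assume "\<not> ?thesis"
  hence q0: "QF n (adjI lo hi) x = 0" using QF_nonneg[of n "adjI lo hi" x] by linarith
  have step: "x $ (i+1) = x $ i" if i: "i + 1 < n" for i
  proof -
    have "(if i \<noteq> i + 1 \<and> adjI lo hi i (i+1) then (x $ i - x $ (i+1))^2 else 0) = 0"
      by (rule double_sum_zero[OF _ q0[unfolded QF_def]], insert i, auto)
    thus ?thesis by (simp add: adjI_def)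
  qed
  have "\<forall>i. i < n \<longrightarrow> x $ i = 0"
  proof (intro allI)
    fix i show "i < n \<longrightarrow> x $ i = 0"
      by (induction i, insert z step, auto)
  qed
  hence "x = 0\<^sub>v n" using vec_zero_if[OF x] by auto
  thus False using x0 by simp
qed

lemma F4_bound:
  assumes lo: "1 \<le> lo" "lo < hi" "hi < n" and x: "x \<in> carrier_vec n" and x0: "x \<noteq> 0\<^sub>v n"
    and const: "\<And>i. i < n \<Longrightarrow> inK lo hi i \<Longrightarrow> x $ i = x $ lo"
  shows "QF n (adjI lo hi) x < 8 * (x \<bullet> x)"
proof (rule ccontr)
  assume "\<not> ?thesis"
  hence ge: "8 * (x \<bullet> x) \<le> QF n (adjI lo hi) x" by simp
  let ?k = "x $ lo"
  let ?c = "cKf lo hi n"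
  have n0: "0 < n" using lo by simp
  have s1: "SK1 lo hi n x = ?c * ?k"
    unfolding SK1_def cKf_def sum_distrib_right
    by (rule sum.cong, insert const, auto simp: ind_def)
  have s2: "(\<Sum>i<n. 2 * ?c * ind lo hi i * (x $ i)^2) = 2 * (SK1 lo hi n x)^2"
  proof -
    have "(\<Sum>i<n. 2 * ?c * ind lo hi i * (x $ i)^2) = (\<Sum>i<n. 2 * ?c * ?k^2 * ind lo hi i)"
      by (rule sum.cong, insert const, auto simp: ind_def)
    also have "\<dots> = 2 * ?c * ?k^2 * ?c" unfolding cKf_def by (simp add: sum_distrib_left)
    finally show ?thesis unfolding s1 by (simp add: power2_eq_square algebra_simps)
  qed
  have qf: "QF n (adjI lo hi) x = (\<Sum>i<n. 4 * rdeg lo hi n i * (x $ i)^2) - PRf lo hi n x"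
  proof -
    have "(\<Sum>i<n. (2 * ?c * ind lo hi i + 4 * rdeg lo hi n i) * (x $ i)^2) =
          (\<Sum>i<n. 2 * ?c * ind lo hi i * (x $ i)^2) + (\<Sum>i<n. 4 * rdeg lo hi n i * (x $ i)^2)"
      by (simp add: sum.distrib algebra_simps)
    thus ?thesis unfolding QF_eq s2 by simp
  qed
  define z0 where "z0 (i::nat) = (if i = 0 then (1::real) else 0)" for i
  have coef: "4 * rdeg lo hi n i \<le> 8 - 4 * z0 i - 4 * ind lo hi i" if i: "i < n" for i
  proof (cases "inK lo hi i")
    case True
    hence "i \<noteq> 0" using lo unfolding inK_def by auto
    moreover have "rdeg lo hi n i \<le> 1" using rdeg_K[OF lo(1,2) True] .
    ultimately show ?thesis using True by (simp add: z0_def ind_def)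
  next
    case False
    show ?thesis
    proof (cases "i = 0")
      case True
      thus ?thesis using False rdeg_0[of lo hi n] by (simp add: z0_def ind_def)
    next
      case f2: False
      thus ?thesis using False rdeg_le2[of lo hi n i] by (simp add: z0_def ind_def)
    qed
  qed
  have pw: "4 * rdeg lo hi n i * (x $ i)^2 \<le> 8 * (x $ i)^2 - 4 * z0 i * (x $ i)^2 - 4 * ind lo hi i * (x $ i)^2"
    if i: "i < n" for i
  proof -
    have "4 * rdeg lo hi n i * (x $ i)^2 \<le> (8 - 4 * z0 i - 4 * ind lo hi i) * (x $ i)^2"
      by (rule mult_right_mono[OF coef[OF i]], simp)
    thus ?thesis by (simp add: algebra_simps)
  qed
  have "(\<Sum>i<n. 4 * rdeg lo hi n i * (x $ i)^2) \<le>
        (\<Sum>i<n. 8 * (x $ i)^2 - 4 * z0 i * (x $ i)^2 - 4 * ind lo hi i * (x $ i)^2)"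
    by (rule sum_mono, insert pw, auto)
  also have "\<dots> = 8 * (x \<bullet> x) - 4 * (\<Sum>i<n. z0 i * (x $ i)^2) - 4 * (\<Sum>i<n. ind lo hi i * (x $ i)^2)"
    unfolding norm_sum[OF x] by (simp add: sum_subtractf sum_distrib_left mult.assoc)
  also have "(\<Sum>i<n. z0 i * (x $ i)^2) = (x $ 0)^2"
  proof -
    have "(\<Sum>i<n. z0 i * (x $ i)^2) = (\<Sum>i<n. if i = 0 then (x $ i)^2 else 0)"
      unfolding z0_def by (rule sum.cong, auto)
    also have "\<dots> = (x $ 0)^2" using n0 by (subst sum.delta[OF finite_lessThan], simp)
    finally show ?thesis .
  qed
  finally have ub: "(\<Sum>i<n. 4 * rdeg lo hi n i * (x $ i)^2) \<le>
      8 * (x \<bullet> x) - 4 * (x $ 0)^2 - 4 * (\<Sum>i<n. ind lo hi i * (x $ i)^2)" .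
  have sk2: "(\<Sum>i<n. ind lo hi i * (x $ i)^2) \<ge> 0" by (rule sum_nonneg, auto simp: ind_def)
  have pr: "PRf lo hi n x \<ge> 0" by (rule PR_nonneg)
  have x00: "(x $ 0)^2 = 0" and sk20: "(\<Sum>i<n. ind lo hi i * (x $ i)^2) = 0" and pr0: "PRf lo hi n x = 0"
    using ge qf ub sk2 pr zero_le_power2[of "x $ 0"] by linarith+
  have xK: "x $ i = 0" if "i < n" "inK lo hi i" for i
  proof -
    have "\<forall>i\<in>{..<n}. ind lo hi i * (x $ i)^2 = 0"
      using sk20 by (subst sum_nonneg_eq_0_iff[symmetric], auto simp: ind_def)
    hence "ind lo hi i * (x $ i)^2 = 0" using that by auto
    thus ?thesis using that by (simp add: ind_def)
  qed
  have xR: "x $ i + x $ j = 0" if "i < n" "j < n" "Rr lo hi i j" for i j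
  proof -
    have "(if Rr lo hi i j then (x $ i + x $ j)^2 else 0) = 0"
      by (rule double_sum_zero[OF _ pr0[unfolded PRf_def]], insert that, auto)
    thus ?thesis using that by simp
  qed
  have "\<forall>i. i < n \<longrightarrow> x $ i = 0"
  proof (intro allI)
    fix i show "i < n \<longrightarrow> x $ i = 0"
    proof (induction i)
      case 0 thus ?case using x00 by simp
    next
      case (Suc i)
      show ?case
      proof
        assume i: "Suc i < n"
        show "x $ Suc i = 0"
        proof (cases "inK lo hi (Suc i)")
          case True thus ?thesis using xK i by simp
        next
          case False
          hence "Rr lo hi i (Suc i)" unfolding Rr_def by simp
          hence "x $ i + x $ Suc i = 0" using xR[of i "Suc i"] i by simp
          thus ?thesis using Suc i by simp
        qed
      qed
    qed
  qed
  hence "x = 0\<^sub>v n" using vec_zero_if[OF x] by auto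
  thus False using x0 by simp
qed

lemma var_single:
  fixes A :: "real mat"
  assumes A: "A \<in> carrier_mat n n" and sym: "transpose_mat A = A" and v: "v \<in> carrier_vec n"
  shows "v \<bullet> (A *\<^sub>v v) \<le> lam A 1 * (v \<bullet> v)"
proof -
  obtain P d where Pc: "P \<in> carrier_mat n n" and
    quad: "\<And>x. x \<in> carrier_vec n \<Longrightarrow> x \<bullet> (A *\<^sub>v x) = (\<Sum>i<n. d i * ((transpose_mat P *\<^sub>v x) $ i)^2) \<and>
                           x \<bullet> x = (\<Sum>i<n. ((transpose_mat P *\<^sub>v x) $ i)^2)"
    and eigs: "eigs A = rev (sort (map d [0..<n]))"
    using spectral_data[OF A sym] by blast
  let ?es = "rev (sort (map d [0..<n]))"
  have so: "sorted (rev ?es)" by simp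
  have dle: "d i \<le> lam A 1" if i: "i < n" for i
  proof -
    have "d i \<in> set ?es" using i by simp
    hence "\<exists>j<length ?es. ?es ! j = d i" by (simp only: in_set_conv_nth)
    then obtain j where j: "j < length ?es" "?es ! j = d i" by blast
    have "?es ! j \<le> ?es ! 0" by (rule sorted_rev_nth_mono[OF so], insert j, auto)
    thus ?thesis unfolding lam_def eigs using j by simp
  qed
  have "v \<bullet> (A *\<^sub>v v) = (\<Sum>i<n. d i * ((transpose_mat P *\<^sub>v v) $ i)^2)" using quad[OF v] by simp
  also have "\<dots> \<le> (\<Sum>i<n. lam A 1 * ((transpose_mat P *\<^sub>v v) $ i)^2)"
    by (rule sum_mono, rule mult_right_mono, insert dle, auto)
  also have "\<dots> = lam A 1 * (v \<bullet> v)" using quad[OF v] by (simp add: sum_distrib_left)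
  finally show ?thesis .
qed

lemma path_lam1:
  assumes m: "m \<ge> 3"
  shows "5 / 2 \<le> lam (path_laplacian m) 1"
proof -
  let ?E = "\<lambda>i j. i + 1 = j \<or> j + 1 = (i::nat)"
  let ?L = "path_laplacian m"
  have Lc: "?L \<in> carrier_mat m m" unfolding path_laplacian_def by (rule laplacian_carrier)
  have Ls: "transpose_mat ?L = ?L" unfolding path_laplacian_def by (rule laplacian_sym, auto)
  define v :: "real vec" where "v = unit_vec m 0 - unit_vec m 1"
  have vc: "v \<in> carrier_vec m" unfolding v_def by simp
  have e0: "(unit_vec m 0 :: real vec) \<in> carrier_vec m" and e1: "(unit_vec m 1 :: real vec) \<in> carrier_vec m" by auto
  have m0: "0 < m" and m1: "1 < m" using m by auto
  have c1: "{k. k < m \<and> k \<noteq> 0 \<and> ?E 0 k} = {1}" using m by auto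
  have c2: "{k. k < m \<and> k \<noteq> 1 \<and> ?E 1 k} = {0, 2}" using m by auto
  have L00: "?L $$ (0,0) = 1" unfolding path_laplacian_def laplacian_def using m0 c1 by simp
  have L11: "?L $$ (1,1) = 2" unfolding path_laplacian_def laplacian_def using m1 c2 by simp
  have L01: "?L $$ (0,1) = -1" unfolding path_laplacian_def laplacian_def using m1 by simp
  have L10: "?L $$ (1,0) = -1" unfolding path_laplacian_def laplacian_def using m1 by simp
  have Lv: "?L *\<^sub>v v = ?L *\<^sub>v unit_vec m 0 - ?L *\<^sub>v unit_vec m 1"
    unfolding v_def by (rule mult_minus_distrib_mat_vec[OF Lc e0 e1])
  have wc: "?L *\<^sub>v v \<in> carrier_vec m" using Lc vc by simp
  have "v \<bullet> (?L *\<^sub>v v) = unit_vec m 0 \<bullet> (?L *\<^sub>v v) - unit_vec m 1 \<bullet> (?L *\<^sub>v v)"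
    unfolding v_def by (rule minus_scalar_prod_distrib[OF e0 e1 wc[unfolded v_def]])
  also have "\<dots> = (?L *\<^sub>v v) $ 0 - (?L *\<^sub>v v) $ 1" using wc m0 m1 by simp
  also have "\<dots> = (?L $$ (0,0) - ?L $$ (0,1)) - (?L $$ (1,0) - ?L $$ (1,1))"
    unfolding Lv using mat_unit_entry[OF Lc] m0 m1 Lc by simp
  also have "\<dots> = 5" unfolding L00 L11 L01 L10 by simp
  finally have q: "v \<bullet> (?L *\<^sub>v v) = 5" .
  have "v \<bullet> v = unit_vec m 0 \<bullet> v - unit_vec m 1 \<bullet> v"
    unfolding v_def by (rule minus_scalar_prod_distrib[OF e0 e1 vc[unfolded v_def]])
  also have "\<dots> = v $ 0 - v $ 1" using vc m0 m1 by simp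
  also have "\<dots> = 2" unfolding v_def using m0 m1 by simp
  finally have nv: "v \<bullet> v = 2" .
  have "5 \<le> lam ?L 1 * 2" using var_single[OF Lc Ls vc] q nv by simp
  thus ?thesis by simp
qed

theorem lemma2:
  fixes p q1 q2 :: nat
  assumes "p \<ge> 6" and "q1 \<ge> 4" and "q2 \<ge> 4"
  defines "L \<equiv> ckc_laplacian p q1 q2"
      and "q \<equiv> max q1 q2"
  shows "lam L 1 \<in> {real p .. real p + 2} \<and>
         lam L 2 \<in> {real p .. real p + 2} \<and>
         (\<forall>j \<in> {3 .. p - 1}. lam L j = real p) \<and>
         lam L p \<in> {0 <..< min (lam (path_laplacian (q - 1)) 1 + 2) (real p)} \<and>
         lam L (p + 1) \<in> {0 <..< min (lam (path_laplacian (q - 1)) 1 + 2) (real p)} \<and>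
         (\<forall>j \<in> {p + 3 .. p + q1 + q2 - 2}. lam L j \<in> {0 ..< 4})"
proof -
  define n where "n = p + q1 + q2 - 2"
  define lo where "lo = q1 - 1"
  define hi where "hi = q1 + p - 2"
  have Ldef: "L = laplacian n (adjI lo hi)" unfolding L_def n_def lo_def hi_def
    by (rule ckc_lap, insert assms, auto)
  have Lc: "L \<in> carrier_mat n n" unfolding Ldef by (rule laplacian_carrier)
  have Ls: "transpose_mat L = L" unfolding Ldef by (rule laplacian_sym, rule adjI_sym)
  have mono: "\<And>i j. 1 \<le> i \<Longrightarrow> i \<le> j \<Longrightarrow> j \<le> n \<Longrightarrow> lam L j \<le> lam L i"
    using lam_mono[OF Lc Ls] by blast
  have lo1: "1 \<le> lo" and lohi: "lo < hi" and hin: "hi < n" unfolding lo_def hi_def n_def using assms by auto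
  have cK: "cKf lo hi n = real p" using cK_eq[of lo hi n] lohi hin unfolding lo_def hi_def using assms by simp
  have qL: "x \<bullet> (L *\<^sub>v x) = QF n (adjI lo hi) x / 2" if "x \<in> carrier_vec n" for x
    unfolding Ldef by (rule quadL[OF that])
  have cardK: "length (filter (inK lo hi) [0..<n]) = p"
  proof -
    have "length (filter (inK lo hi) [0..<n]) = card {i. i < n \<and> inK lo hi i}"
      unfolding length_filter_conv_card by (rule arg_cong[where f=card], auto)
    also have "{i. i < n \<and> inK lo hi i} = {lo..hi}" using hin unfolding inK_def by auto
    finally show ?thesis unfolding lo_def hi_def using assms by simp
  qed
  have cardK': "length (filter (\<lambda>i. inK lo hi i \<and> i \<noteq> lo) [0..<n]) = p - 1"
  proof -
    have "length (filter (\<lambda>i. inK lo hi i \<and> i \<noteq> lo) [0..<n]) = card {i. i < n \<and> inK lo hi i \<and> i \<noteq> lo}"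
      unfolding length_filter_conv_card by (rule arg_cong[where f=card], auto)
    also have "{i. i < n \<and> inK lo hi i \<and> i \<noteq> lo} = {lo<..hi}" using hin unfolding inK_def by auto
    finally show ?thesis unfolding lo_def hi_def using assms by simp
  qed
  have F1: "real p \<le> lam L (p - 1)"
  proof -
    define fs where "fs = map (unit_vec n) (filter (\<lambda>i. \<not> inK lo hi i) [0..<n]) @ [vec n (ind lo hi)]"
    have lenf: "length fs = n - p + 1"
    proof -
      have "length (filter (\<lambda>i. \<not> inK lo hi i) [0..<n]) + length (filter (inK lo hi) [0..<n]) = n"
        using sum_length_filter_compl[of "inK lo hi" "[0..<n]"] by simp
      thus ?thesis unfolding fs_def using cardK by simp
    qed
    show ?thesis
    proof (rule var_lower[OF Lc Ls, of fs])
      show "set fs \<subseteq> carrier_vec n" unfolding fs_def by auto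
      show "0 < p - 1" using assms by simp
      show "p - 1 + length fs \<le> n" unfolding lenf using hin cardK assms unfolding n_def by simp
      fix x :: "real vec" assume x: "x \<in> carrier_vec n" and c: "\<forall>f\<in>set fs. f \<bullet> x = 0"
      have z: "x $ i = 0" if "i < n" "\<not> inK lo hi i" for i
      proof -
        have "unit_vec n i \<in> set fs" unfolding fs_def using that by auto
        hence "unit_vec n i \<bullet> x = 0" using c by blast
        thus ?thesis using x that by simp
      qed
      have "vec n (ind lo hi) \<bullet> x = 0" using c unfolding fs_def by auto
      hence s: "SK1 lo hi n x = 0" unfolding SK1_def using x
        by (auto simp: scalar_prod_def lessThan_atLeast0)
      have "(2 * cKf lo hi n) * (x \<bullet> x) \<le> QF n (adjI lo hi) x" by (rule F1_bound[OF x z s], auto)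
      thus "real p * (x \<bullet> x) \<le> x \<bullet> (L *\<^sub>v x)" unfolding qL[OF x] cK by simp
    qed
  qed
  have F2: "lam L 3 \<le> real p"
  proof -
    have "lam L (length [unit_vec n lo :: real vec, unit_vec n hi] + 1) \<le> real p"
    proof (rule var_upper[OF Lc Ls])
      show "set [unit_vec n lo, unit_vec n hi] \<subseteq> carrier_vec n" by auto
      show "length [unit_vec n lo, unit_vec n hi] < n" using n_def assms by simp
      fix x :: "real vec" assume x: "x \<in> carrier_vec n" and c: "\<forall>f\<in>set [unit_vec n lo, unit_vec n hi]. f \<bullet> x = 0"
      have z: "x $ lo = 0" "x $ hi = 0" using c x lohi hin by auto
      have "QF n (adjI lo hi) x \<le> (2 * cKf lo hi n) * (x \<bullet> x)"
        by (rule F2_bound[OF lo1 lohi hin _ x z], insert cK assms, auto)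
      thus "x \<bullet> (L *\<^sub>v x) \<le> real p * (x \<bullet> x)" unfolding qL[OF x] cK by simp
    qed
    thus ?thesis by (simp add: numeral_3_eq_3)
  qed
  have F3: "lam L 1 \<le> real p + 2"
  proof -
    have "lam L (length ([] :: real vec list) + 1) \<le> real p + 2"
    proof (rule var_upper[OF Lc Ls])
      show "length ([] :: real vec list) < n" using n_def assms by simp
      fix x :: "real vec" assume x: "x \<in> carrier_vec n"
      have "QF n (adjI lo hi) x \<le> (2 * cKf lo hi n + 4) * (x \<bullet> x)" by (rule F3_bound[OF lo1 lohi hin x])
      thus "x \<bullet> (L *\<^sub>v x) \<le> (real p + 2) * (x \<bullet> x)" unfolding qL[OF x] cK by (simp add: algebra_simps)
    qed auto
    thus ?thesis by simp
  qed
  have F4: "lam L p < 4"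
  proof -
    define fs :: "real vec list" where "fs = map (\<lambda>i. unit_vec n i - unit_vec n lo) (filter (\<lambda>i. inK lo hi i \<and> i \<noteq> lo) [0..<n])"
    have lenf: "length fs = p - 1" unfolding fs_def using cardK' by simp
    have "lam L (length fs + 1) < 4"
    proof (rule var_upper_strict[OF Lc Ls])
      show "set fs \<subseteq> carrier_vec n" unfolding fs_def by auto
      show "length fs < n" unfolding lenf n_def using assms by simp
      fix x :: "real vec" assume x: "x \<in> carrier_vec n" and x0: "x \<noteq> 0\<^sub>v n" and c: "\<forall>f\<in>set fs. f \<bullet> x = 0"
      have const: "x $ i = x $ lo" if i: "i < n" "inK lo hi i" for i
      proof (cases "i = lo")
        case False
        hence "unit_vec n i - unit_vec n lo \<in> set fs" unfolding fs_def using i by auto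
        hence "(unit_vec n i - unit_vec n lo) \<bullet> x = 0" using c by blast
        moreover have "(unit_vec n i - unit_vec n lo) \<bullet> x = unit_vec n i \<bullet> x - unit_vec n lo \<bullet> x"
          by (rule minus_scalar_prod_distrib[OF _ _ x], auto)
        ultimately show ?thesis using x i lohi hin by simp
      qed simp
      have "QF n (adjI lo hi) x < 8 * (x \<bullet> x)" by (rule F4_bound[OF lo1 lohi hin x x0 const])
      thus "x \<bullet> (L *\<^sub>v x) < 4 * (x \<bullet> x)" unfolding qL[OF x] by simp
    qed
    thus ?thesis unfolding lenf using assms by simp
  qed
  have F5: "0 \<le> lam L n"
  proof (rule var_lower[OF Lc Ls, of "[]"])
    fix x :: "real vec" assume x: "x \<in> carrier_vec n"
    show "0 * (x \<bullet> x) \<le> x \<bullet> (L *\<^sub>v x)" unfolding qL[OF x] using QF_nonneg[of n "adjI lo hi" x] by simp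
  qed (insert n_def assms, auto)
  have F6: "0 < lam L (n - 1)"
  proof (rule var_lower_strict[OF Lc Ls, of "[unit_vec n 0]"])
    fix x :: "real vec" assume x: "x \<in> carrier_vec n" and x0: "x \<noteq> 0\<^sub>v n" and c: "\<forall>f\<in>set [unit_vec n 0]. f \<bullet> x = 0"
    have "x $ 0 = 0" using c x hin by auto
    hence "QF n (adjI lo hi) x > 0" by (rule F6_pos[OF x x0])
    thus "0 * (x \<bullet> x) < x \<bullet> (L *\<^sub>v x)" unfolding qL[OF x] by simp
  qed (insert n_def assms, auto)
  have F7: "5/2 \<le> lam (path_laplacian (q - 1)) 1" by (rule path_lam1, insert assms, auto simp: q_def)
  have n: "n \<ge> p + 6" unfolding n_def using assms by simp
  have mn: "min (lam (path_laplacian (q - 1)) 1 + 2) (real p) > 4" using F7 assms by simp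
  have "lam L (p - 1) \<le> lam L 2" by (rule mono, insert assms n, auto)
  hence l2: "lam L 2 \<ge> real p" using F1 by simp
  have l12: "lam L 2 \<le> lam L 1" by (rule mono, insert n, auto)
  have A1: "lam L 1 \<in> {real p .. real p + 2}" using l2 l12 F3 by simp
  have A2: "lam L 2 \<in> {real p .. real p + 2}" using l2 l12 F3 by simp
  have A3: "\<forall>j \<in> {3 .. p - 1}. lam L j = real p"
  proof
    fix j assume j: "j \<in> {3 .. p - 1}"
    have "lam L j \<le> lam L 3" by (rule mono, insert j n, auto)
    moreover have "lam L (p - 1) \<le> lam L j" by (rule mono, insert j n, auto)
    ultimately show "lam L j = real p" using F1 F2 by simp
  qed
  have pp: "lam L (p + 1) \<le> lam L p" by (rule mono, insert n assms, auto)
  have pn: "lam L (n - 1) \<le> lam L (p + 1)" by (rule mono, insert n assms, auto)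
  have A4: "lam L p \<in> {0 <..< min (lam (path_laplacian (q - 1)) 1 + 2) (real p)}"
    using pp pn F6 F4 mn by simp
  have A5: "lam L (p + 1) \<in> {0 <..< min (lam (path_laplacian (q - 1)) 1 + 2) (real p)}"
    using pp pn F6 F4 mn by simp
  have A6: "\<forall>j \<in> {p + 3 .. p + q1 + q2 - 2}. lam L j \<in> {0 ..< 4}"
  proof
    fix j assume j: "j \<in> {p + 3 .. p + q1 + q2 - 2}"
    have "lam L n \<le> lam L j" by (rule mono, insert j n, auto simp: n_def)
    moreover have "lam L j \<le> lam L p" by (rule mono, insert j n assms, auto simp: n_def)
    ultimately show "lam L j \<in> {0 ..< 4}" using F4 F5 by simp
  qed
  show ?thesis using A1 A2 A3 A4 A5 A6 by blast
qed

end
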